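(* Let $H$ be a self-adjoint operator on a Hilbert space $\mathcal H$ and $U(t)=e^{itH}$. Let $\mathcal B\subset D(H)$ be a dense linear subspace invariant under all $U(t)$. Then: (i) $\mathcal B$ is a core for $H$. (ii) If $X$ is a symmetric operator with $\mathcal B\subset D(X)$, $X\mathcal B\subset D(X)$ and $X^2|_{\mathcal B}=H|_{\mathcal B}$, then $X|_{\mathcal B}$ is essentially self-adjoint, $\overline{X|_{\mathcal B}}=\overline X$, and $\overline X^2=H$. In particular $H\ge0$ and $D(H)\subset D(\overline X)$. Finally, these conclusions remain valid if instead of $U$-invariance one only assumes that $\mathcal B$ is invariant under $H$ and contains a dense set of analytic vectors for $H$.
   Context: $D(A)$ is the domain of an operator $A$ and $\overline A$ its closure. A subspace $L\subset D(A)$ of a self-adjoint operator $A$ is a core if $A$ is the closure of $A|_L$. $\overline X^2$ has domain $\{\psi\in D(\overline X):\overline X\psi\in D(\overline X)\}$. A vector $\psi$ is analytic for a symmetric operator $H$ if $\psi\in D(H^n)$ for all $n$ and $\sum_n t^n\|H^n\psi\|/n!<\infty$ for some $t>0$. *)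

theory Defs
  imports "HOL-Analysis.Analysis"
begin

text \<open>The distribution has no complex inner product spaces, so we introduce the class
of complex Hilbert spaces: a real Banach space with a compatible complex scalar
multiplication and a complex inner product (antilinear in the first argument)
inducing the norm.\<close>

class chilbert = banach +
  fixes scaleC :: "complex \<Rightarrow> 'a \<Rightarrow> 'a" (infixr \<open>*\<^sub>C\<close> 75)
    and cinner :: "'a \<Rightarrow> 'a \<Rightarrow> complex"
  assumes scaleC_add_right: "a *\<^sub>C (x + y) = a *\<^sub>C x + a *\<^sub>C y"
    and scaleC_add_left: "(a + b) *\<^sub>C x = a *\<^sub>C x + b *\<^sub>C x"
    and scaleC_scaleC: "a *\<^sub>C (b *\<^sub>C x) = (a * b) *\<^sub>C x"
    and scaleC_one: "1 *\<^sub>C x = x"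
    and scaleR_scaleC: "scaleR r x = of_real r *\<^sub>C x"
    and cinner_add_left: "cinner (x + y) z = cinner x z + cinner y z"
    and cinner_scaleC_left: "cinner (a *\<^sub>C x) y = cnj a * cinner x y"
    and cinner_commute: "cinner x y = cnj (cinner y x)"
    and cinner_pos: "x \<noteq> 0 \<Longrightarrow> 0 < Re (cinner x x)"
    and norm_eq_sqrt_cinner: "norm x = sqrt (Re (cinner x x))"

type_synonym 'a lop = "'a \<Rightarrow> 'a option"

definition app :: "'a lop \<Rightarrow> 'a \<Rightarrow> 'a" where
  "app A x = the (A x)"

definition csubspace :: "'a::chilbert set \<Rightarrow> bool" where
  "csubspace S \<longleftrightarrow> 0 \<in> S \<and> (\<forall>x\<in>S. \<forall>y\<in>S. x + y \<in> S) \<and> (\<forall>c. \<forall>x\<in>S. c *\<^sub>C x \<in> S)"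

definition dense_set :: "'a::chilbert set \<Rightarrow> bool" where
  "dense_set S \<longleftrightarrow> closure S = UNIV"

definition linear_op :: "'a::chilbert lop \<Rightarrow> bool" where
  "linear_op A \<longleftrightarrow> csubspace (dom A) \<and>
     (\<forall>x\<in>dom A. \<forall>y\<in>dom A. app A (x + y) = app A x + app A y) \<and>
     (\<forall>c. \<forall>x\<in>dom A. app A (c *\<^sub>C x) = c *\<^sub>C app A x)"

definition densely_defined :: "'a::chilbert lop \<Rightarrow> bool" where
  "densely_defined A \<longleftrightarrow> linear_op A \<and> dense_set (dom A)"

definition graph_op :: "'a lop \<Rightarrow> ('a \<times> 'a) set" where
  "graph_op A = {(x, y). A x = Some y}"

definition closable :: "'a::chilbert lop \<Rightarrow> bool" where
  "closable A \<longleftrightarrow> (\<forall>y. (0, y) \<in> closure (graph_op A) \<longrightarrow> y = 0)"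

definition closure_op :: "'a::chilbert lop \<Rightarrow> 'a lop" where
  "closure_op A x = (if \<exists>y. (x, y) \<in> closure (graph_op A)
                     then Some (THE y. (x, y) \<in> closure (graph_op A)) else None)"

text \<open>Adjoint (meaningful for densely defined A).\<close>
definition adjoint_op :: "'a::chilbert lop \<Rightarrow> 'a lop" where
  "adjoint_op A y = (if \<exists>z. \<forall>x\<in>dom A. cinner (app A x) y = cinner x z
                     then Some (THE z. \<forall>x\<in>dom A. cinner (app A x) y = cinner x z) else None)"

definition symmetric_op :: "'a::chilbert lop \<Rightarrow> bool" where
  "symmetric_op A \<longleftrightarrow> densely_defined A \<and>
     (\<forall>x\<in>dom A. \<forall>y\<in>dom A. cinner (app A x) y = cinner x (app A y))"

definition self_adjoint :: "'a::chilbert lop \<Rightarrow> bool" where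
  "self_adjoint A \<longleftrightarrow> densely_defined A \<and> adjoint_op A = A"

definition ess_self_adjoint :: "'a::chilbert lop \<Rightarrow> bool" where
  "ess_self_adjoint A \<longleftrightarrow> closable A \<and> self_adjoint (closure_op A)"

definition is_core :: "'a::chilbert lop \<Rightarrow> 'a set \<Rightarrow> bool" where
  "is_core A L \<longleftrightarrow> L \<subseteq> dom A \<and> closure_op (A |` L) = A"

definition nonneg_op :: "'a::chilbert lop \<Rightarrow> bool" where
  "nonneg_op A \<longleftrightarrow> (\<forall>x\<in>dom A. cinner x (app A x) \<in> \<real> \<and> 0 \<le> Re (cinner x (app A x)))"

primrec op_pow :: "'a lop \<Rightarrow> nat \<Rightarrow> 'a lop" where
  "op_pow A 0 = Some"
| "op_pow A (Suc n) = A \<circ>\<^sub>m op_pow A n"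

definition analytic_vector :: "'a::chilbert lop \<Rightarrow> 'a \<Rightarrow> bool" where
  "analytic_vector A x \<longleftrightarrow> (\<forall>n. x \<in> dom (op_pow A n)) \<and>
     (\<exists>t>0. summable (\<lambda>n. t ^ n * norm (app (op_pow A n) x) / fact n))"

text \<open>U(t) = e^{itH}: U is a strongly continuous one-parameter group of unitaries whose
generator is iH, i.e. D(H) is exactly the set of x for which t \<mapsto> U t x is differentiable
at 0, and the derivative there is i H x (Stone's theorem).\<close>
definition unitary_group_of :: "'a::chilbert lop \<Rightarrow> (real \<Rightarrow> 'a \<Rightarrow> 'a) \<Rightarrow> bool" where
  "unitary_group_of H U \<longleftrightarrow>
     (\<forall>t. linear_op (\<lambda>x. Some (U t x)) \<and> surj (U t) \<and>
          (\<forall>x y. cinner (U t x) (U t y) = cinner x y)) \<and>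
     U 0 = id \<and> (\<forall>s t. U (s + t) = U s \<circ> U t) \<and>
     (\<forall>x. continuous_on UNIV (\<lambda>t. U t x)) \<and>
     (\<forall>x. x \<in> dom H \<longleftrightarrow> (\<exists>v. ((\<lambda>t. U t x) has_vector_derivative v) (at 0))) \<and>
     (\<forall>x\<in>dom H. ((\<lambda>t. U t x) has_vector_derivative (\<i> *\<^sub>C app H x)) (at 0))"

end

theory Submission
  imports Defs
begin

lemma scaleC_zero_left[simp]: "0 *\<^sub>C (x::'a::chilbert) = 0"
  using scaleR_scaleC[of 0 x] by simp

lemma scaleC_minus1: "(-1) *\<^sub>C (x::'a::chilbert) = - x"
  by (metis scaleR_scaleC of_real_1 of_real_minus scaleR_minus1_left)

lemma scaleC_zero_right[simp]: "a *\<^sub>C 0 = 0"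
  by (metis add_cancel_right_right scaleC_add_right)

lemma scaleC_minus_right: "a *\<^sub>C (- (x::'a::chilbert)) = - (a *\<^sub>C x)"
  by (metis add_eq_0_iff scaleC_add_right scaleC_zero_right)

lemma scaleC_diff_right: "a *\<^sub>C ((x::'a::chilbert) - y) = a *\<^sub>C x - a *\<^sub>C y"
  by (metis diff_conv_add_uminus scaleC_add_right scaleC_minus_right)

lemma scaleC_minus_left: "(- a) *\<^sub>C (x::'a::chilbert) = - (a *\<^sub>C x)"
  by (metis scaleC_scaleC mult_minus1 scaleC_minus1)

lemma scaleC_diff_left: "(a - b) *\<^sub>C (x::'a::chilbert) = a *\<^sub>C x - b *\<^sub>C x"
  by (metis diff_conv_add_uminus scaleC_add_left scaleC_minus_left)

lemma cinner_add_right: "cinner z ((x::'a::chilbert) + y) = cinner z x + cinner z y"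
  by (metis complex_cnj_add cinner_add_left cinner_commute)

lemma cinner_scaleC_right: "cinner (x::'a::chilbert) (a *\<^sub>C y) = a * cinner x y"
  by (metis complex_cnj_cnj complex_cnj_mult cinner_commute cinner_scaleC_left)

lemma cinner_zero_left[simp]: "cinner 0 (y::'a::chilbert) = 0"
  using cinner_add_left[of 0 0 y] by simp

lemma cinner_zero_right[simp]: "cinner (x::'a::chilbert) 0 = 0"
  using cinner_add_right[of x 0 0] by simp

lemma cinner_minus_left: "cinner (- (x::'a::chilbert)) y = - cinner x y"
  by (metis add_eq_0_iff cinner_add_left cinner_zero_left)

lemma cinner_minus_right: "cinner y (- (x::'a::chilbert)) = - cinner y x"
  by (metis add_eq_0_iff cinner_add_right cinner_zero_right)

lemma cinner_diff_left: "cinner ((x::'a::chilbert) - y) z = cinner x z - cinner y z"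
  by (metis diff_conv_add_uminus cinner_add_left cinner_minus_left)

lemma cinner_diff_right: "cinner z ((x::'a::chilbert) - y) = cinner z x - cinner z y"
  by (metis diff_conv_add_uminus cinner_add_right cinner_minus_right)

lemma cinner_self_Im: "Im (cinner (x::'a::chilbert) x) = 0"
proof -
  have h: "cinner x x = cnj (cinner x x)" by (rule cinner_commute)
  have "Im (cinner x x) = Im (cnj (cinner x x))" by (subst h, rule refl)
  then show ?thesis by simp
qed

lemma cinner_self_Re_ge: "0 \<le> Re (cinner (x::'a::chilbert) x)"
proof (cases "x = 0")
  case True then show ?thesis by simp
next
  case False then show ?thesis using cinner_pos[of x] by simp
qed

lemma cinner_self_Re: "Re (cinner (x::'a::chilbert) x) = (norm x)^2"
  by (simp add: norm_eq_sqrt_cinner cinner_self_Re_ge)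

lemma cinner_self: "cinner (x::'a::chilbert) x = of_real ((norm x)^2)"
  by (rule complex_eqI) (simp_all add: cinner_self_Re cinner_self_Im)

lemma cinner_self_eq_0[simp]: "cinner (x::'a::chilbert) x = 0 \<longleftrightarrow> x = 0"
proof
  assume "cinner x x = 0"
  then show "x = 0" using cinner_pos[of x] by (cases "x = 0") auto
qed simp

lemma cinner_scaleR_left: "cinner (scaleR r (x::'a::chilbert)) y = of_real r * cinner x y"
  by (simp add: scaleR_scaleC cinner_scaleC_left)

lemma cinner_scaleR_right: "cinner (x::'a::chilbert) (scaleR r y) = of_real r * cinner x y"
  by (simp add: scaleR_scaleC cinner_scaleC_right)

lemma cinner_cnj_Re: "Re (cinner (y::'a::chilbert) x) = Re (cinner x y)"
  by (metis cinner_commute cnj.simps(1))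

lemma norm_sq_add: "(norm ((x::'a::chilbert) + y))^2 = (norm x)^2 + (norm y)^2 + 2 * Re (cinner x y)"
proof -
  have "(norm (x+y))^2 = Re (cinner (x+y) (x+y))" by (rule cinner_self_Re[symmetric])
  also have "\<dots> = Re (cinner x x) + Re (cinner x y) + Re (cinner y x) + Re (cinner y y)"
    by (simp add: cinner_add_left cinner_add_right)
  also have "\<dots> = (norm x)^2 + (norm y)^2 + 2 * Re (cinner x y)"
    by (simp add: cinner_self_Re cinner_cnj_Re[of y x])
  finally show ?thesis .
qed

lemma norm_sq_diff: "(norm ((x::'a::chilbert) - y))^2 = (norm x)^2 + (norm y)^2 - 2 * Re (cinner x y)"
  using norm_sq_add[of x "-y"] by (simp add: cinner_minus_right)

lemma norm_scaleC: "norm (a *\<^sub>C (x::'a::chilbert)) = cmod a * norm x"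
proof -
  have "(norm (a *\<^sub>C x))^2 = Re (cinner (a *\<^sub>C x) (a *\<^sub>C x))" by (rule cinner_self_Re[symmetric])
  also have "\<dots> = Re (cnj a * a * cinner x x)"
    by (simp add: cinner_scaleC_left cinner_scaleC_right mult_ac)
  also have "\<dots> = (cmod a)^2 * (norm x)^2"
    by (simp add: cinner_self_Im cinner_self_Re cmod_power2) (simp add: power2_eq_square algebra_simps)
  finally have "(norm (a *\<^sub>C x))^2 = (cmod a * norm x)^2"
    by (simp add: power_mult_distrib)
  then show ?thesis by (simp add: power2_eq_iff_nonneg)
qed

lemma cauchy_schwarz: "cmod (cinner (x::'a::chilbert) y) \<le> norm x * norm y"
proof (cases "y = 0")
  case True then show ?thesis by simp
next
  case False
  define c where "c = cinner y x / cinner y y"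
  have yy: "cinner y y = of_real ((norm y)^2)" by (rule cinner_self)
  have ny: "norm y > 0" using False by simp
  have cc: "cnj c = cinner x y / cinner y y"
    by (simp add: c_def yy) (metis cinner_commute)
  have h0: "cnj c * cinner y y = cinner x y"
    unfolding cc using False by simp
  have h: "c * cinner x y = cnj c * c * cinner y y"
    by (subst h0[symmetric]) (simp only: mult_ac)
  have e1: "cinner (x - c *\<^sub>C y) (x - c *\<^sub>C y) = cinner x x - c * cinner x y - cnj c * cinner y x + cnj c * c * cinner y y"
    by (simp add: cinner_diff_left cinner_diff_right cinner_scaleC_left
        cinner_scaleC_right algebra_simps)
  have e2: "cinner x x - c * cinner x y - cnj c * cinner y x + cnj c * c * cinner y y = cinner x x - cnj c * cinner y x"
    unfolding h[symmetric] by (simp add: algebra_simps)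
  have e3: "cnj c * cinner y x = cinner x y * cnj (cinner x y) / of_real ((norm y)^2)"
    by (simp add: c_def yy) (metis cinner_commute)
  have e4: "cinner x y * cnj (cinner x y) / of_real ((norm y)^2) = of_real ((cmod (cinner x y))^2 / (norm y)^2)"
    by (simp only: of_real_divide complex_norm_square)
  have "(norm (x - c *\<^sub>C y))^2 = Re (cinner (x - c *\<^sub>C y) (x - c *\<^sub>C y))"
    by (rule cinner_self_Re[symmetric])
  also have "\<dots> = Re (cinner x x - cnj c * cinner y x)"
    by (simp only: e1 e2)
  also have "\<dots> = Re (cinner x x - of_real ((cmod (cinner x y))^2 / (norm y)^2))"
    by (simp only: e3 e4)
  also have "\<dots> = (norm x)^2 - (cmod (cinner x y))^2 / (norm y)^2"
    by (simp add: cinner_self_Re)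
  finally have "0 \<le> (norm x)^2 - (cmod (cinner x y))^2 / (norm y)^2"
    by (metis zero_le_power2)
  then have "(cmod (cinner x y))^2 \<le> (norm x * norm y)^2"
    using ny by (simp add: field_simps power_mult_distrib)
  then show ?thesis
    by (meson mult_nonneg_nonneg norm_ge_zero power2_le_imp_le)
qed

lemma bounded_bilinear_cinner: "bounded_bilinear (cinner :: 'a::chilbert \<Rightarrow> 'a \<Rightarrow> complex)"
proof
  fix a a' b b' :: 'a and r :: real
  show "cinner (a + a') b = cinner a b + cinner a' b" by (rule cinner_add_left)
  show "cinner a (b + b') = cinner a b + cinner a b'" by (rule cinner_add_right)
  show "cinner (scaleR r a) b = scaleR r (cinner a b)" by (simp add: cinner_scaleR_left scaleR_conv_of_real)
  show "cinner a (scaleR r b) = scaleR r (cinner a b)" by (simp add: cinner_scaleR_right scaleR_conv_of_real)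
next
  show "\<exists>K. \<forall>a b::'a. norm (cinner a b) \<le> norm a * norm b * K"
    by (rule exI[of _ 1]) (simp add: cauchy_schwarz)
qed

lemmas tendsto_cinner = bounded_bilinear.tendsto[OF bounded_bilinear_cinner]

lemma cauchy_from_bound:
  fixes X :: "nat \<Rightarrow> 'b::metric_space"
  assumes b: "\<And>m n. dist (X m) (X n) \<le> f m + f n" and f: "f \<longlonglongrightarrow> 0"
  shows "Cauchy X"
proof (rule metric_CauchyI)
  fix e :: real assume "e > 0"
  then have "eventually (\<lambda>n. f n < e/2) sequentially"
    using order_tendstoD(2)[OF f, of "e/2"] by simp
  then obtain M where M: "\<And>n. n \<ge> M \<Longrightarrow> f n < e/2" by (auto simp: eventually_sequentially)
  show "\<exists>M. \<forall>m\<ge>M. \<forall>n\<ge>M. dist (X m) (X n) < e"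
  proof (intro exI[of _ M] allI impI)
    fix m n assume "m \<ge> M" "n \<ge> M"
    then show "dist (X m) (X n) < e" using M[of m] M[of n] b[of m n] by linarith
  qed
qed

lemma csubspace_facts:
  assumes "csubspace S"
  shows "0 \<in> S" "\<And>a b. a \<in> S \<Longrightarrow> b \<in> S \<Longrightarrow> a + b \<in> S"
    "\<And>c a. a \<in> S \<Longrightarrow> c *\<^sub>C a \<in> S"
    "\<And>a b. a \<in> S \<Longrightarrow> b \<in> S \<Longrightarrow> a - b \<in> S"
    "\<And>r a. a \<in> S \<Longrightarrow> scaleR r a \<in> S"
    "\<And>a. a \<in> S \<Longrightarrow> - a \<in> S"
proof -
  show "0 \<in> S" "\<And>a b. a \<in> S \<Longrightarrow> b \<in> S \<Longrightarrow> a + b \<in> S" "\<And>c a. a \<in> S \<Longrightarrow> c *\<^sub>C a \<in> S"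
    using assms unfolding csubspace_def by auto
  note h = this
  show neg: "\<And>a. a \<in> S \<Longrightarrow> - a \<in> S" using h(3)[of _ "-1"] by (simp add: scaleC_minus1)
  show "\<And>a b. a \<in> S \<Longrightarrow> b \<in> S \<Longrightarrow> a - b \<in> S" using h(2) neg
    by (metis diff_conv_add_uminus)
  show "\<And>r a. a \<in> S \<Longrightarrow> scaleR r a \<in> S" using h(3) by (simp add: scaleR_scaleC)
qed

lemma perp_zero_Re:
  fixes w m :: "'a::chilbert"
  assumes "\<And>l::real. (norm w)^2 \<le> (norm (w - scaleR l m))^2"
  shows "Re (cinner w m) = 0"
proof (cases "m = 0")
  case True then show ?thesis by simp
next
  case False
  define r where "r = Re (cinner w m)"
  define l where "l = r / (norm m)^2"
  have nm: "(norm m)^2 > 0" using False by simp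
  have "(norm (w - scaleR l m))^2 = (norm w)^2 + l^2 * (norm m)^2 - 2 * l * r"
    by (simp add: norm_sq_diff r_def cinner_scaleR_right power_mult_distrib)
  with assms[of l] have "0 \<le> l^2 * (norm m)^2 - 2 * l * r" by simp
  also have "l^2 * (norm m)^2 - 2 * l * r = - (r^2 / (norm m)^2)"
    using nm by (simp add: l_def field_simps power2_eq_square)
  finally have "r^2 / (norm m)^2 \<le> 0" by simp
  with nm have "r^2 \<le> 0" by (simp add: divide_le_0_iff)
  then show ?thesis unfolding r_def by simp
qed

lemma dense_of_perp:
  fixes S :: "'a::chilbert set"
  assumes S: "csubspace S" and perp: "\<And>\<phi>. (\<forall>m\<in>S. cinner m \<phi> = 0) \<Longrightarrow> \<phi> = 0"
  shows "closure S = UNIV"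
proof -
  note SF = csubspace_facts[OF S]
  have "y \<in> closure S" for y
  proof -
    define d where "d = infdist y S"
    have dle: "\<And>z. z \<in> S \<Longrightarrow> d \<le> norm (y - z)"
      using infdist_le[of _ S y] by (simp add: d_def dist_norm)
    have d0: "0 \<le> d" unfolding d_def by (rule infdist_nonneg)
    have ex: "\<exists>z\<in>S. norm (y - z) < d + inverse (real (Suc n))" for n
    proof -
      have ne: "S \<noteq> {}" using SF(1) by blast
      have "d < d + inverse (real (Suc n))" by simp
      then have "(INF a\<in>S. dist y a) < d + inverse (real (Suc n))"
        using infdist_notempty[OF ne] d_def by simp
      then show ?thesis
        by (subst (asm) cINF_less_iff) (auto simp: ne dist_norm intro: bdd_belowI[of _ 0])
    qed
    then obtain s where s: "\<And>n. s n \<in> S" "\<And>n. norm (y - s n) < d + inverse (real (Suc n))"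
      by metis
    define e where "e n = inverse (real (Suc n))" for n
    have e0: "0 \<le> e n" "e n \<le> 1" for n unfolding e_def by (auto simp: field_simps)
    have bound: "(norm (s m - s n))^2 \<le> (4*d+4) * (e m + e n)" for m n
    proof -
      define u where "u = y - s m"
      define v where "v = y - s n"
      have par: "(norm (u - v))^2 + (norm (u + v))^2 = 2*(norm u)^2 + 2*(norm v)^2"
        by (simp add: norm_sq_add norm_sq_diff)
      have "u - v = s n - s m" by (simp add: u_def v_def)
      then have uv: "(norm (u - v))^2 = (norm (s m - s n))^2" by (simp add: norm_minus_commute)
      have mid: "scaleR (1/2) (s m + s n) \<in> S" using SF(5)[OF SF(2)[OF s(1) s(1)]] .
      have "u + v = scaleR 2 (y - scaleR (1/2) (s m + s n))"
        by (simp add: u_def v_def algebra_simps scaleR_2)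
      then have "norm (u + v) = 2 * norm (y - scaleR (1/2) (s m + s n))" by simp
      then have "2 * d \<le> norm (u + v)" using dle[OF mid] by simp
      then have "(2*d)^2 \<le> (norm (u+v))^2"
        using d0 by (intro power_mono) auto
      then have up: "4 * d^2 \<le> (norm (u+v))^2" by (simp add: power_mult_distrib)
      have nu: "(norm u)^2 \<le> (d + e m)^2"
        using s(2)[of m] unfolding u_def e_def[symmetric] by (intro power_mono) auto
      have nv: "(norm v)^2 \<le> (d + e n)^2"
        using s(2)[of n] unfolding v_def e_def[symmetric] by (intro power_mono) auto
      have "(norm (s m - s n))^2 \<le> 2*(d + e m)^2 + 2*(d + e n)^2 - 4 * d^2"
        using par up nu nv uv by linarith
      also have "\<dots> = 4*d*(e m + e n) + 2*(e m)^2 + 2*(e n)^2"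
        by (simp add: power2_eq_square algebra_simps)
      also have "\<dots> \<le> 4*d*(e m + e n) + 4*(e m + e n)"
      proof -
        have "e m * e m \<le> e m" "e n * e n \<le> e n" using e0[of m] e0[of n] by (simp_all add: mult_left_le)
        then have "2*(e m * e m) + 2*(e n * e n) \<le> 4*(e m + e n)" using e0[of m] e0[of n] by (smt (verit))
        then show ?thesis unfolding power2_eq_square by linarith
      qed
      finally show ?thesis by (simp add: algebra_simps)
    qed
    define f where "f n = sqrt ((4*d+4) * e n)" for n
    have "Cauchy s"
    proof (rule cauchy_from_bound[of s f])
      fix m n
      have "dist (s m) (s n) = sqrt ((norm (s m - s n))^2)" by (simp add: dist_norm)
      also have "\<dots> \<le> sqrt ((4*d+4) * (e m + e n))" using real_le_rsqrt[OF bound[of m n]] by simp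
      also have "\<dots> \<le> f m + f n" unfolding f_def
        using sqrt_add_le_add_sqrt[of "(4*d+4) * e m" "(4*d+4) * e n"] e0 d0
        by (simp add: distrib_left)
      finally show "dist (s m) (s n) \<le> f m + f n" .
    next
      show "f \<longlonglongrightarrow> 0" unfolding f_def e_def
        using tendsto_real_sqrt[OF tendsto_mult_right_zero[OF LIMSEQ_inverse_real_of_nat, of "4*d+4"]]
        by simp
    qed
    then obtain p where p: "s \<longlonglongrightarrow> p" using Cauchy_convergent_iff convergent_def by blast
    have pcl: "p \<in> closure S" unfolding closure_sequential using s(1) p by blast
    have lim1: "(\<lambda>n. norm (y - s n)) \<longlonglongrightarrow> norm (y - p)" by (intro tendsto_intros p)
    have lim2: "(\<lambda>n. norm (y - s n)) \<longlonglongrightarrow> d"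
    proof (rule tendsto_sandwich[of "\<lambda>n. d" _ _ "\<lambda>n. d + e n"])
      show "\<forall>\<^sub>F n in sequentially. d \<le> norm (y - s n)" using dle s(1) by simp
      show "\<forall>\<^sub>F n in sequentially. norm (y - s n) \<le> d + e n" using s(2) e_def
        by (simp add: less_imp_le)
      show "(\<lambda>n. d + e n) \<longlonglongrightarrow> d" unfolding e_def
        using tendsto_add[OF tendsto_const LIMSEQ_inverse_real_of_nat, of d] by simp
    qed simp
    have np: "norm (y - p) = d" using LIMSEQ_unique[OF lim1 lim2] .
    have geq: "(norm (y - p))^2 \<le> (norm ((y - p) - scaleR l m))^2" if m: "m \<in> S" for l m
    proof -
      have "(\<lambda>n. norm (y - (s n + scaleR l m))) \<longlonglongrightarrow> norm (y - (p + scaleR l m))"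
        by (intro tendsto_intros p)
      moreover have "\<forall>n. d \<le> norm (y - (s n + scaleR l m))"
        using dle[OF SF(2)[OF s(1) SF(5)[OF m]]] by blast
      ultimately have "d \<le> norm (y - (p + scaleR l m))"
        by (intro LIMSEQ_le_const) auto
      then show ?thesis using np d0 by (simp add: power_mono algebra_simps)
    qed
    have orth: "cinner m (y - p) = 0" if m: "m \<in> S" for m
    proof -
      have r1: "Re (cinner (y - p) m) = 0" by (rule perp_zero_Re) (rule geq[OF m])
      have "\<i> *\<^sub>C m \<in> S" using SF(3)[OF m] .
      then have r2: "Re (cinner (y - p) (\<i> *\<^sub>C m)) = 0" by (intro perp_zero_Re geq)
      have "cinner (y - p) m = 0" using r1 r2 by (simp add: cinner_scaleC_right complex_eq_iff)
      then show ?thesis by (metis cinner_commute complex_cnj_zero)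
    qed
    have "y - p = 0" using perp orth by blast
    then show ?thesis using pcl by simp
  qed
  then show ?thesis by blast
qed

lemma cauchy_dominated2:
  fixes X :: "nat \<Rightarrow> 'b::metric_space" and Y :: "nat \<Rightarrow> 'c::metric_space" and Z :: "nat \<Rightarrow> 'd::metric_space"
  assumes b: "\<And>m n. dist (X m) (X n) \<le> dist (Y m) (Y n) + dist (Z m) (Z n)"
    and Y: "Cauchy Y" and Z: "Cauchy Z"
  shows "Cauchy X"
proof (rule metric_CauchyI)
  fix e :: real assume e: "e > 0"
  obtain M1 where M1: "\<And>m n. m \<ge> M1 \<Longrightarrow> n \<ge> M1 \<Longrightarrow> dist (Y m) (Y n) < e/2"
    using metric_CauchyD[OF Y, of "e/2"] e by auto
  obtain M2 where M2: "\<And>m n. m \<ge> M2 \<Longrightarrow> n \<ge> M2 \<Longrightarrow> dist (Z m) (Z n) < e/2"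
    using metric_CauchyD[OF Z, of "e/2"] e by auto
  show "\<exists>M. \<forall>m\<ge>M. \<forall>n\<ge>M. dist (X m) (X n) < e"
  proof (intro exI[of _ "max M1 M2"] allI impI)
    fix m n assume "m \<ge> max M1 M2" "n \<ge> max M1 M2"
    then show "dist (X m) (X n) < e" using M1[of m n] M2[of m n] b[of m n] by simp
  qed
qed

lemma cauchy_lim:
  fixes X :: "nat \<Rightarrow> 'a::complete_space"
  assumes "Cauchy X" obtains l where "X \<longlonglongrightarrow> l"
  using assms Cauchy_convergent_iff convergent_def by blast

lemma tendsto_scaleC:
  fixes f :: "nat \<Rightarrow> 'a::chilbert"
  assumes "f \<longlonglongrightarrow> x" shows "(\<lambda>n. c *\<^sub>C f n) \<longlonglongrightarrow> c *\<^sub>C x"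
proof -
  have "(\<lambda>n. f n - x) \<longlonglongrightarrow> 0" using assms by (simp add: LIM_zero)
  then have "(\<lambda>n. norm (f n - x)) \<longlonglongrightarrow> 0" by (simp add: tendsto_norm_zero)
  then have "(\<lambda>n. cmod c * norm (f n - x)) \<longlonglongrightarrow> 0" by (simp add: tendsto_mult_right_zero)
  then have "(\<lambda>n. norm (c *\<^sub>C f n - c *\<^sub>C x)) \<longlonglongrightarrow> 0"
    by (simp add: scaleC_diff_right[symmetric] norm_scaleC)
  then show ?thesis by (simp add: tendsto_norm_zero_iff LIM_zero_iff)
qed

lemma perp_dense_zero:
  fixes w :: "'a::chilbert"
  assumes "dense_set D" "\<And>x. x \<in> D \<Longrightarrow> cinner x w = 0"
  shows "w = 0"
proof -
  have "w \<in> closure D" using assms(1) unfolding dense_set_def by simp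
  then obtain d where d: "\<And>n. d n \<in> D" "d \<longlonglongrightarrow> w" unfolding closure_sequential by blast
  have "(\<lambda>n. cinner (d n) w) \<longlonglongrightarrow> cinner w w" by (intro tendsto_cinner d tendsto_const)
  moreover have "(\<lambda>n. cinner (d n) w) = (\<lambda>n. 0)" using assms(2) d(1) by simp
  ultimately have "(\<lambda>n. 0) \<longlonglongrightarrow> cinner w w" by simp
  then have "cinner w w = 0" using LIMSEQ_unique tendsto_const by blast
  then show ?thesis by simp
qed

lemma perp_dense_zero':
  fixes w :: "'a::chilbert"
  assumes "dense_set D" "\<And>x. x \<in> D \<Longrightarrow> cinner w x = 0"
  shows "w = 0"
  using perp_dense_zero[OF assms(1)] assms(2) by (metis cinner_commute complex_cnj_zero)

lemma dom_app: "x \<in> dom A \<Longrightarrow> A x = Some (app A x)"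
  by (auto simp: app_def)

lemma app_eq: "A x = Some y \<Longrightarrow> app A x = y"
  by (simp add: app_def)

lemma linear_opD:
  assumes "linear_op A"
  shows "csubspace (dom A)"
    "\<And>x y. x \<in> dom A \<Longrightarrow> y \<in> dom A \<Longrightarrow> app A (x + y) = app A x + app A y"
    "\<And>c x. x \<in> dom A \<Longrightarrow> app A (c *\<^sub>C x) = c *\<^sub>C app A x"
    "\<And>x y. x \<in> dom A \<Longrightarrow> y \<in> dom A \<Longrightarrow> app A (x - y) = app A x - app A y"
    "app A 0 = 0"
    "\<And>x y. x \<in> dom A \<Longrightarrow> y \<in> dom A \<Longrightarrow> x + y \<in> dom A"
    "\<And>c x. x \<in> dom A \<Longrightarrow> c *\<^sub>C x \<in> dom A"
    "\<And>x y. x \<in> dom A \<Longrightarrow> y \<in> dom A \<Longrightarrow> x - y \<in> dom A"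
    "0 \<in> dom A"
proof -
  show cs: "csubspace (dom A)" using assms unfolding linear_op_def by simp
  note SF = csubspace_facts[OF cs]
  show add: "\<And>x y. x \<in> dom A \<Longrightarrow> y \<in> dom A \<Longrightarrow> app A (x + y) = app A x + app A y"
    using assms unfolding linear_op_def by blast
  show sc: "\<And>c x. x \<in> dom A \<Longrightarrow> app A (c *\<^sub>C x) = c *\<^sub>C app A x"
    using assms unfolding linear_op_def by blast
  show "\<And>x y. x \<in> dom A \<Longrightarrow> y \<in> dom A \<Longrightarrow> x + y \<in> dom A" by (rule SF(2))
  show "\<And>c x. x \<in> dom A \<Longrightarrow> c *\<^sub>C x \<in> dom A" by (rule SF(3))
  show "\<And>x y. x \<in> dom A \<Longrightarrow> y \<in> dom A \<Longrightarrow> x - y \<in> dom A" by (rule SF(4))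
  show "0 \<in> dom A" by (rule SF(1))
  show "app A 0 = 0" using sc[of 0 0] SF(1) by simp
  show "\<And>x y. x \<in> dom A \<Longrightarrow> y \<in> dom A \<Longrightarrow> app A (x - y) = app A x - app A y"
  proof -
    fix x y assume xy: "x \<in> dom A" "y \<in> dom A"
    have "app A (x - y) = app A (x + (-1) *\<^sub>C y)" by (simp add: scaleC_minus1)
    also have "\<dots> = app A x + (-1) *\<^sub>C app A y" using add[OF xy(1) SF(3)[OF xy(2)]] sc[OF xy(2)] by simp
    finally show "app A (x - y) = app A x - app A y" by (simp add: scaleC_minus1)
  qed
qed

definition symm_on :: "'a::chilbert lop \<Rightarrow> bool" where
  "symm_on A \<longleftrightarrow> (\<forall>x\<in>dom A. \<forall>y\<in>dom A. cinner (app A x) y = cinner x (app A y))"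

lemma symm_onD: "symm_on A \<Longrightarrow> x \<in> dom A \<Longrightarrow> y \<in> dom A \<Longrightarrow> cinner (app A x) y = cinner x (app A y)"
  unfolding symm_on_def by blast

lemma symm_real:
  assumes s: "symm_on A" and x: "x \<in> dom A" shows "Im (cinner (app A x) x) = 0"
proof -
  have "cinner (app A x) x = cinner x (app A x)" by (rule symm_onD[OF s x x])
  also have "\<dots> = cnj (cinner (app A x) x)" by (rule cinner_commute)
  finally have "Im (cinner (app A x) x) = Im (cnj (cinner (app A x) x))" by simp
  then show ?thesis by simp
qed

lemma graph_closure_iff:
  fixes A :: "'a::chilbert lop"
  shows "(x, y) \<in> closure (graph_op A) \<longleftrightarrow>
    (\<exists>a. (\<forall>n. a n \<in> dom A) \<and> a \<longlonglongrightarrow> x \<and> (\<lambda>n. app A (a n)) \<longlonglongrightarrow> y)"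
proof
  assume "(x, y) \<in> closure (graph_op A)"
  then obtain f where f: "\<And>n. f n \<in> graph_op A" "f \<longlonglongrightarrow> (x, y)"
    unfolding closure_sequential by blast
  have "\<And>n. A (fst (f n)) = Some (snd (f n))"
    using f(1) by (simp add: graph_op_def case_prod_beta)
  then have "\<And>n. fst (f n) \<in> dom A \<and> app A (fst (f n)) = snd (f n)"
    by (simp add: domIff app_def)
  moreover have "(\<lambda>n. fst (f n)) \<longlonglongrightarrow> x" "(\<lambda>n. snd (f n)) \<longlonglongrightarrow> y"
    using tendsto_fst[OF f(2)] tendsto_snd[OF f(2)] by simp_all
  ultimately show "\<exists>a. (\<forall>n. a n \<in> dom A) \<and> a \<longlonglongrightarrow> x \<and> (\<lambda>n. app A (a n)) \<longlonglongrightarrow> y"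
    by (intro exI[of _ "\<lambda>n. fst (f n)"]) simp
next
  assume "\<exists>a. (\<forall>n. a n \<in> dom A) \<and> a \<longlonglongrightarrow> x \<and> (\<lambda>n. app A (a n)) \<longlonglongrightarrow> y"
  then obtain a where a: "\<And>n. a n \<in> dom A" "a \<longlonglongrightarrow> x" "(\<lambda>n. app A (a n)) \<longlonglongrightarrow> y" by blast
  have "\<And>n. (a n, app A (a n)) \<in> graph_op A" using dom_app[OF a(1)] by (simp add: graph_op_def)
  moreover have "(\<lambda>n. (a n, app A (a n))) \<longlonglongrightarrow> (x, y)" using a by (intro tendsto_Pair)
  ultimately show "(x, y) \<in> closure (graph_op A)" unfolding closure_sequential
    by (intro exI[of _ "\<lambda>n. (a n, app A (a n))"]) simp
qed

lemma graph_op_iff: "((x::'a::chilbert), y) \<in> graph_op A \<longleftrightarrow> A x = Some y"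
  by (simp add: graph_op_def)

lemma graph_closure_unique:
  assumes lin: "linear_op A" and cl: "closable A"
    and "(x, y) \<in> closure (graph_op A)" "(x, y') \<in> closure (graph_op A)"
  shows "y = y'"
proof -
  note L = linear_opD[OF lin]
  obtain a where a: "\<And>n. a n \<in> dom A" "a \<longlonglongrightarrow> x" "(\<lambda>n. app A (a n)) \<longlonglongrightarrow> y"
    using assms(3) graph_closure_iff by blast
  obtain b where b: "\<And>n. b n \<in> dom A" "b \<longlonglongrightarrow> x" "(\<lambda>n. app A (b n)) \<longlonglongrightarrow> y'"
    using assms(4) graph_closure_iff by blast
  have "(\<lambda>n. a n - b n) \<longlonglongrightarrow> x - x" by (intro tendsto_intros a b)
  moreover have "(\<lambda>n. app A (a n - b n)) \<longlonglongrightarrow> y - y'"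
    using tendsto_diff[OF a(3) b(3)] L(4)[OF a(1) b(1)] by simp
  moreover have "\<And>n. a n - b n \<in> dom A" using L(8) a(1) b(1) by blast
  ultimately have "(0, y - y') \<in> closure (graph_op A)"
    unfolding graph_closure_iff by (intro exI[of _ "\<lambda>n. a n - b n"]) simp
  then have "y - y' = 0" using cl unfolding closable_def by blast
  then show ?thesis by simp
qed

lemma closure_op_iff:
  assumes lin: "linear_op A" and cl: "closable A"
  shows "closure_op A x = Some y \<longleftrightarrow> (x, y) \<in> closure (graph_op A)"
proof -
  have the_eq: "(THE y. (x, y) \<in> closure (graph_op A)) = y0" if y0: "(x, y0) \<in> closure (graph_op A)" for y0
  proof (rule the_equality)
    show "(x, y0) \<in> closure (graph_op A)" by (rule y0)
    fix y' assume "(x, y') \<in> closure (graph_op A)"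
    then show "y' = y0" by (rule graph_closure_unique[OF lin cl _ y0])
  qed
  show ?thesis
  proof
    assume h: "closure_op A x = Some y"
    have ex: "\<exists>y. (x, y) \<in> closure (graph_op A)"
    proof (rule ccontr)
      assume "\<not> ?thesis"
      then have "closure_op A x = None" unfolding closure_op_def by simp
      then show False using h by simp
    qed
    then obtain y0 where y0: "(x, y0) \<in> closure (graph_op A)" by blast
    have "closure_op A x = Some y0" unfolding closure_op_def using ex the_eq[OF y0] by simp
    then have "y = y0" using h by simp
    then show "(x, y) \<in> closure (graph_op A)" using y0 by simp
  next
    assume h: "(x, y) \<in> closure (graph_op A)"
    then have ex: "\<exists>y. (x, y) \<in> closure (graph_op A)" by blast
    show "closure_op A x = Some y" unfolding closure_op_def using ex the_eq[OF h] by simp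
  qed
qed

lemma graph_closure_op:
  assumes lin: "linear_op A" and cl: "closable A"
  shows "graph_op (closure_op A) = closure (graph_op A)"
  using closure_op_iff[OF lin cl] by (auto simp: graph_op_def)

lemma closure_op_ext:
  assumes lin: "linear_op A" and cl: "closable A" and "x \<in> dom A"
  shows "closure_op A x = Some (app A x)"
proof -
  have "(x, app A x) \<in> graph_op A" using assms(3) by (simp add: graph_op_def app_def domIff)
  then show ?thesis using closure_op_iff[OF lin cl] closure_subset by blast
qed

lemma closure_op_seq:
  assumes lin: "linear_op A" and cl: "closable A"
  shows "closure_op A x = Some y \<longleftrightarrow>
    (\<exists>a. (\<forall>n. a n \<in> dom A) \<and> a \<longlonglongrightarrow> x \<and> (\<lambda>n. app A (a n)) \<longlonglongrightarrow> y)"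
  using closure_op_iff[OF lin cl] graph_closure_iff by blast

lemma closure_op_closed:
  assumes lin: "linear_op A" and cl: "closable A"
    and a: "\<And>n. closure_op A (a n) = Some (b n)" "a \<longlonglongrightarrow> x" "b \<longlonglongrightarrow> y"
  shows "closure_op A x = Some y"
proof -
  have "\<And>n. (a n, b n) \<in> closure (graph_op A)" using a(1) closure_op_iff[OF lin cl] by simp
  moreover have "(\<lambda>n. (a n, b n)) \<longlonglongrightarrow> (x, y)" using a by (intro tendsto_Pair)
  ultimately have "(x, y) \<in> closure (closure (graph_op A))" unfolding closure_sequential
    by (intro exI[of _ "\<lambda>n. (a n, b n)"]) simp
  then show ?thesis using closure_op_iff[OF lin cl] by simp
qed

lemma closable_of_symm:
  assumes d: "dense_set (dom A)" and s: "symm_on A"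
  shows "closable A"
  unfolding closable_def
proof (intro allI impI)
  fix y assume "(0, y) \<in> closure (graph_op A)"
  then obtain a where a: "\<And>n. a n \<in> dom A" "a \<longlonglongrightarrow> 0" "(\<lambda>n. app A (a n)) \<longlonglongrightarrow> y"
    using graph_closure_iff by blast
  show "y = 0"
  proof (rule perp_dense_zero'[OF d])
    fix z assume z: "z \<in> dom A"
    have "(\<lambda>n. cinner (app A (a n)) z) \<longlonglongrightarrow> cinner y z" by (intro tendsto_cinner a tendsto_const)
    moreover have "(\<lambda>n. cinner (app A (a n)) z) = (\<lambda>n. cinner (a n) (app A z))"
      using symm_onD[OF s a(1) z] by simp
    moreover have "(\<lambda>n. cinner (a n) (app A z)) \<longlonglongrightarrow> cinner 0 (app A z)" by (intro tendsto_cinner a tendsto_const)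
    ultimately have "(\<lambda>n. cinner (app A (a n)) z) \<longlonglongrightarrow> 0" by simp
    with \<open>(\<lambda>n. cinner (app A (a n)) z) \<longlonglongrightarrow> cinner y z\<close> show "cinner y z = 0"
      by (rule LIMSEQ_unique)
  qed
qed

lemma adjoint_iff:
  fixes A :: "'a::chilbert lop"
  assumes d: "dense_set (dom A)"
  shows "adjoint_op A y = Some z \<longleftrightarrow> (\<forall>x\<in>dom A. cinner (app A x) y = cinner x z)"
proof -
  let ?P = "\<lambda>z. \<forall>x\<in>dom A. cinner (app A x) y = cinner x z"
  have uniq: "z1 = z2" if "?P z1" "?P z2" for z1 z2
  proof -
    have "z1 - z2 = 0"
    proof (rule perp_dense_zero[OF d])
      fix x assume "x \<in> dom A"
      then show "cinner x (z1 - z2) = 0" using that by (simp add: cinner_diff_right)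
    qed
    then show ?thesis by simp
  qed
  have the_eq: "(THE z. ?P z) = z0" if "?P z0" for z0
    using the_equality[of ?P z0] uniq that by blast
  show ?thesis
  proof
    assume h: "adjoint_op A y = Some z"
    have ex: "\<exists>z. ?P z"
    proof (rule ccontr)
      assume "\<not> ?thesis"
      then have "adjoint_op A y = None" unfolding adjoint_op_def by simp
      then show False using h by simp
    qed
    then obtain z0 where z0: "?P z0" by blast
    have "adjoint_op A y = Some z0" unfolding adjoint_op_def using ex the_eq[OF z0] by simp
    then show "?P z" using h z0 by simp
  next
    assume h: "?P z"
    then have ex: "\<exists>z. ?P z" by blast
    show "adjoint_op A y = Some z" unfolding adjoint_op_def using ex the_eq[OF h] by simp
  qed
qed

lemma sa_facts:
  fixes H :: "'a::chilbert lop"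
  assumes sa: "self_adjoint H"
  shows "linear_op H" "dense_set (dom H)"
    "\<And>y z. H y = Some z \<longleftrightarrow> (\<forall>x\<in>dom H. cinner (app H x) y = cinner x z)"
    "symm_on H"
proof -
  show lin: "linear_op H" and d: "dense_set (dom H)"
    using sa unfolding self_adjoint_def densely_defined_def by auto
  have eq: "adjoint_op H = H" using sa unfolding self_adjoint_def by simp
  show ch: "\<And>y z. H y = Some z \<longleftrightarrow> (\<forall>x\<in>dom H. cinner (app H x) y = cinner x z)"
    using adjoint_iff[OF d] eq by simp
  show "symm_on H" unfolding symm_on_def
  proof (intro ballI)
    fix x y assume x: "x \<in> dom H" and y: "y \<in> dom H"
    have "H y = Some (app H y)" using y by (rule dom_app)
    then show "cinner (app H x) y = cinner x (app H y)" using ch x by blast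
  qed
qed

lemma sa_closed:
  fixes H :: "'a::chilbert lop"
  assumes sa: "self_adjoint H" and a: "\<And>n. a n \<in> dom H" "a \<longlonglongrightarrow> x" "(\<lambda>n. app H (a n)) \<longlonglongrightarrow> y"
  shows "H x = Some y"
proof -
  note F = sa_facts[OF sa]
  show ?thesis unfolding F(3)
  proof
    fix u assume u: "u \<in> dom H"
    have "(\<lambda>n. cinner (app H u) (a n)) \<longlonglongrightarrow> cinner (app H u) x" by (intro tendsto_cinner a tendsto_const)
    moreover have "(\<lambda>n. cinner (app H u) (a n)) = (\<lambda>n. cinner u (app H (a n)))"
      using symm_onD[OF F(4) u a(1)] by simp
    moreover have "(\<lambda>n. cinner u (app H (a n))) \<longlonglongrightarrow> cinner u y" by (intro tendsto_cinner a tendsto_const)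
    ultimately show "cinner (app H u) x = cinner u y" using LIMSEQ_unique by metis
  qed
qed

lemma sa_graph_closure:
  fixes H :: "'a::chilbert lop"
  assumes sa: "self_adjoint H" and "(x, y) \<in> closure (graph_op H)"
  shows "H x = Some y"
  using assms(2) unfolding graph_closure_iff using sa_closed[OF sa] by blast

lemma closure_op_add:
  assumes lin: "linear_op A" and cl: "closable A"
    and "closure_op A x = Some u" "closure_op A y = Some v"
  shows "closure_op A (x + y) = Some (u + v)"
proof -
  note L = linear_opD[OF lin]
  obtain a where a: "\<And>n. a n \<in> dom A" "a \<longlonglongrightarrow> x" "(\<lambda>n. app A (a n)) \<longlonglongrightarrow> u"
    using assms(3) closure_op_seq[OF lin cl] by blast
  obtain b where b: "\<And>n. b n \<in> dom A" "b \<longlonglongrightarrow> y" "(\<lambda>n. app A (b n)) \<longlonglongrightarrow> v"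
    using assms(4) closure_op_seq[OF lin cl] by blast
  have "(\<lambda>n. app A (a n + b n)) \<longlonglongrightarrow> u + v"
    using tendsto_add[OF a(3) b(3)] L(2)[OF a(1) b(1)] by simp
  moreover have "(\<lambda>n. a n + b n) \<longlonglongrightarrow> x + y" by (intro tendsto_add a b)
  moreover have "\<forall>n. a n + b n \<in> dom A" using L(6)[OF a(1) b(1)] by blast
  ultimately show ?thesis unfolding closure_op_seq[OF lin cl]
    by (intro exI[of _ "\<lambda>n. a n + b n"]) simp
qed

lemma closure_op_scale:
  assumes lin: "linear_op A" and cl: "closable A"
    and "closure_op A x = Some u"
  shows "closure_op A (c *\<^sub>C x) = Some (c *\<^sub>C u)"
proof -
  note L = linear_opD[OF lin]
  obtain a where a: "\<And>n. a n \<in> dom A" "a \<longlonglongrightarrow> x" "(\<lambda>n. app A (a n)) \<longlonglongrightarrow> u"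
    using assms(3) closure_op_seq[OF lin cl] by blast
  have "(\<lambda>n. app A (c *\<^sub>C a n)) \<longlonglongrightarrow> c *\<^sub>C u"
    using tendsto_scaleC[OF a(3)] L(3)[OF a(1)] by simp
  moreover have "(\<lambda>n. c *\<^sub>C a n) \<longlonglongrightarrow> c *\<^sub>C x" by (intro tendsto_scaleC a)
  moreover have "\<forall>n. c *\<^sub>C a n \<in> dom A" using L(7)[OF a(1)] by blast
  ultimately show ?thesis unfolding closure_op_seq[OF lin cl]
    by (intro exI[of _ "\<lambda>n. c *\<^sub>C a n"]) simp
qed

lemma closure_op_linear:
  assumes lin: "linear_op A" and cl: "closable A"
  shows "linear_op (closure_op A)"
proof -
  let ?C = "closure_op A"
  note L = linear_opD[OF lin]
  have z: "0 \<in> dom ?C" using closure_op_ext[OF lin cl L(9)] by blast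
  have add: "x + y \<in> dom ?C \<and> app ?C (x + y) = app ?C x + app ?C y" if "x \<in> dom ?C" "y \<in> dom ?C" for x y
    using closure_op_add[OF lin cl dom_app[OF that(1)] dom_app[OF that(2)]] by (simp add: domIff app_def)
  have sc: "c *\<^sub>C x \<in> dom ?C \<and> app ?C (c *\<^sub>C x) = c *\<^sub>C app ?C x" if "x \<in> dom ?C" for x c
    using closure_op_scale[OF lin cl dom_app[OF that]] by (simp add: domIff app_def)
  show ?thesis unfolding linear_op_def csubspace_def using z add sc by blast
qed

lemma dense_mono: "dense_set A \<Longrightarrow> A \<subseteq> B \<Longrightarrow> dense_set B"
  unfolding dense_set_def by (metis closure_mono top.extremum_uniqueI)

lemma closure_op_dom_sup:
  assumes lin: "linear_op A" and cl: "closable A"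
  shows "dom A \<subseteq> dom (closure_op A)"
  using closure_op_ext[OF lin cl] by blast

lemma closure_op_app:
  assumes lin: "linear_op A" and cl: "closable A" and "x \<in> dom A"
  shows "app (closure_op A) x = app A x"
  using closure_op_ext[OF assms] by (simp add: app_def)

lemma closure_op_symm:
  assumes lin: "linear_op A" and cl: "closable A" and s: "symm_on A"
  shows "symm_on (closure_op A)"
  unfolding symm_on_def
proof (intro ballI)
  fix x y assume x: "x \<in> dom (closure_op A)" and y: "y \<in> dom (closure_op A)"
  obtain a where a: "\<And>n. a n \<in> dom A" "a \<longlonglongrightarrow> x" "(\<lambda>n. app A (a n)) \<longlonglongrightarrow> app (closure_op A) x"
    using dom_app[OF x] closure_op_seq[OF lin cl] by blast
  obtain b where b: "\<And>n. b n \<in> dom A" "b \<longlonglongrightarrow> y" "(\<lambda>n. app A (b n)) \<longlonglongrightarrow> app (closure_op A) y"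
    using dom_app[OF y] closure_op_seq[OF lin cl] by blast
  have "(\<lambda>n. cinner (app A (a n)) (b n)) \<longlonglongrightarrow> cinner (app (closure_op A) x) y" by (intro tendsto_cinner a b)
  moreover have "(\<lambda>n. cinner (app A (a n)) (b n)) = (\<lambda>n. cinner (a n) (app A (b n)))"
    using symm_onD[OF s a(1) b(1)] by simp
  moreover have "(\<lambda>n. cinner (a n) (app A (b n))) \<longlonglongrightarrow> cinner x (app (closure_op A) y)" by (intro tendsto_cinner a b)
  ultimately show "cinner (app (closure_op A) x) y = cinner x (app (closure_op A) y)" using LIMSEQ_unique by metis
qed

lemma range_csubspace:
  assumes lin: "linear_op A"
  shows "csubspace ((\<lambda>x. app A x + c *\<^sub>C x) ` dom A)"
proof -
  note L = linear_opD[OF lin]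
  have "0 \<in> (\<lambda>x. app A x + c *\<^sub>C x) ` dom A" using L(5) L(9) by (intro image_eqI[of _ _ 0]) auto
  moreover have "u + v \<in> (\<lambda>x. app A x + c *\<^sub>C x) ` dom A" if uv: "u \<in> (\<lambda>x. app A x + c *\<^sub>C x) ` dom A" "v \<in> (\<lambda>x. app A x + c *\<^sub>C x) ` dom A" for u v
  proof -
    obtain x y where "x \<in> dom A" "y \<in> dom A" "u = app A x + c *\<^sub>C x" "v = app A y + c *\<^sub>C y" using uv by blast
    then show ?thesis using L(2) L(6) by (intro image_eqI[of _ _ "x + y"]) (auto simp: scaleC_add_right)
  qed
  moreover have "k *\<^sub>C u \<in> (\<lambda>x. app A x + c *\<^sub>C x) ` dom A" if u: "u \<in> (\<lambda>x. app A x + c *\<^sub>C x) ` dom A" for u k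
  proof -
    obtain x where "x \<in> dom A" "u = app A x + c *\<^sub>C x" using u by blast
    then show ?thesis using L(3) L(7) by (intro image_eqI[of _ _ "k *\<^sub>C x"]) (auto simp: scaleC_add_right scaleC_scaleC mult.commute)
  qed
  ultimately show ?thesis unfolding csubspace_def by blast
qed

lemma coer_symm:
  fixes A :: "'a::chilbert lop"
  assumes s: "symm_on A" and x: "x \<in> dom A" and c: "c = \<i> \<or> c = - \<i>"
  shows "(norm (app A x + c *\<^sub>C x))^2 = (norm (app A x))^2 + (norm x)^2"
proof -
  have cm: "cmod c = 1" using c by auto
  have im: "Im (cinner (app A x) x) = 0" by (rule symm_real[OF s x])
  have "Re (cinner (app A x) (c *\<^sub>C x)) = Re (c * cinner (app A x) x)"
    by (simp add: cinner_scaleC_right)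
  also have "\<dots> = 0" using c im by auto
  finally show ?thesis by (simp add: norm_sq_add norm_scaleC cm)
qed

lemma range_approx:
  fixes A :: "'a::chilbert lop" and c :: complex
  assumes lin: "linear_op A"
    and coer: "\<And>x. x \<in> dom A \<Longrightarrow> (norm (app A x))^2 + (norm x)^2 \<le> (norm (app A x + c *\<^sub>C x))^2"
    and dense: "closure ((\<lambda>x. app A x + c *\<^sub>C x) ` dom A) = UNIV"
  shows "\<exists>x y. (x, y) \<in> closure (graph_op A) \<and> y + c *\<^sub>C x = \<eta>"
proof -
  note L = linear_opD[OF lin]
  have "\<eta> \<in> closure ((\<lambda>x. app A x + c *\<^sub>C x) ` dom A)" using dense by simp
  then obtain r where r: "\<And>n. r n \<in> (\<lambda>x. app A x + c *\<^sub>C x) ` dom A" "r \<longlonglongrightarrow> \<eta>"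
    unfolding closure_sequential by blast
  have "\<forall>n. \<exists>a. a \<in> dom A \<and> r n = app A a + c *\<^sub>C a" using r(1) by blast
  then obtain a where a: "\<And>n. a n \<in> dom A" "\<And>n. r n = app A (a n) + c *\<^sub>C a n" by metis
  have diff: "app A (a m - a n) + c *\<^sub>C (a m - a n) = r m - r n" for m n
    using L(4)[OF a(1) a(1)] a(2)[of m] a(2)[of n] by (simp add: scaleC_diff_right algebra_simps)
  have b1: "dist (a m) (a n) \<le> dist (r m) (r n)" and b2: "dist (app A (a m)) (app A (a n)) \<le> dist (r m) (r n)" for m n
  proof -
    have h: "(norm (app A (a m) - app A (a n)))^2 + (norm (a m - a n))^2 \<le> (norm (r m - r n))^2"
      using coer[OF L(8)[OF a(1) a(1)]] diff L(4)[OF a(1) a(1)] by simp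
    have h1: "(norm (a m - a n))^2 \<le> (norm (r m - r n))^2" using h by (smt (verit) zero_le_power2)
    have h2: "(norm (app A (a m) - app A (a n)))^2 \<le> (norm (r m - r n))^2" using h by (smt (verit) zero_le_power2)
    show "dist (a m) (a n) \<le> dist (r m) (r n)" unfolding dist_norm by (rule power2_le_imp_le[OF h1]) simp
    show "dist (app A (a m)) (app A (a n)) \<le> dist (r m) (r n)" unfolding dist_norm by (rule power2_le_imp_le[OF h2]) simp
  qed
  have cr: "Cauchy r" using r(2) by (simp add: LIMSEQ_imp_Cauchy)
  have "Cauchy a" by (rule cauchy_dominated2[OF _ cr cr]) (use b1 in \<open>smt (verit) zero_le_dist\<close>)
  then obtain x where x: "a \<longlonglongrightarrow> x" by (rule cauchy_lim)
  have "Cauchy (\<lambda>n. app A (a n))" by (rule cauchy_dominated2[OF _ cr cr]) (use b2 in \<open>smt (verit) zero_le_dist\<close>)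
  then obtain y where y: "(\<lambda>n. app A (a n)) \<longlonglongrightarrow> y" by (rule cauchy_lim)
  have "(x, y) \<in> closure (graph_op A)" unfolding graph_closure_iff using a(1) x y by blast
  moreover have "y + c *\<^sub>C x = \<eta>"
  proof -
    have "(\<lambda>n. app A (a n) + c *\<^sub>C a n) \<longlonglongrightarrow> y + c *\<^sub>C x" by (intro tendsto_add y tendsto_scaleC x)
    then have "r \<longlonglongrightarrow> y + c *\<^sub>C x" using a(2) by presburger
    then show ?thesis using r(2) LIMSEQ_unique by blast
  qed
  ultimately show ?thesis by blast
qed

lemma dense_range_of_perp:
  fixes A :: "'a::chilbert lop"
  assumes lin: "linear_op A"
    and pp: "\<And>\<phi>. (\<forall>b\<in>dom A. cinner (app A b + c *\<^sub>C b) \<phi> = 0) \<Longrightarrow> \<phi> = 0"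
  shows "closure ((\<lambda>x. app A x + c *\<^sub>C x) ` dom A) = UNIV"
  by (rule dense_of_perp[OF range_csubspace[OF lin]]) (use pp in auto)

lemma esa_of_perp:
  fixes A :: "'a::chilbert lop"
  assumes lin: "linear_op A" and d: "dense_set (dom A)" and s: "symm_on A"
    and pp: "\<And>\<phi>. (\<forall>b\<in>dom A. cinner (app A b + \<i> *\<^sub>C b) \<phi> = 0) \<Longrightarrow> \<phi> = 0"
    and pm: "\<And>\<phi>. (\<forall>b\<in>dom A. cinner (app A b + (- \<i>) *\<^sub>C b) \<phi> = 0) \<Longrightarrow> \<phi> = 0"
  shows "closable A" "self_adjoint (closure_op A)"
proof -
  show cl: "closable A" by (rule closable_of_symm[OF d s])
  let ?C = "closure_op A"
  have linC: "linear_op ?C" by (rule closure_op_linear[OF lin cl])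
  have dC: "dense_set (dom ?C)" by (rule dense_mono[OF d closure_op_dom_sup[OF lin cl]])
  have sC: "symm_on ?C" by (rule closure_op_symm[OF lin cl s])
  have "adjoint_op ?C y = ?C y" for y
  proof (cases "y \<in> dom ?C")
    case True
    have "\<forall>x\<in>dom ?C. cinner (app ?C x) y = cinner x (app ?C y)" using symm_onD[OF sC _ True] by blast
    then have "adjoint_op ?C y = Some (app ?C y)" using adjoint_iff[OF dC] by blast
    then show ?thesis using dom_app[OF True] by simp
  next
    case False
    then have Cy: "?C y = None" by (simp add: domIff)
    show ?thesis
    proof (cases "adjoint_op ?C y")
      case None then show ?thesis using Cy by simp
    next
      case (Some z)
      then have adj: "\<And>u. u \<in> dom ?C \<Longrightarrow> cinner (app ?C u) y = cinner u z"
        using adjoint_iff[OF dC] by blast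
      have coer: "\<And>x. x \<in> dom A \<Longrightarrow> (norm (app A x))^2 + (norm x)^2 \<le> (norm (app A x + (- \<i>) *\<^sub>C x))^2"
        using coer_symm[OF s] by simp
      obtain x w where xw: "(x, w) \<in> closure (graph_op A)" "w + (- \<i>) *\<^sub>C x = z + (- \<i>) *\<^sub>C y"
        using range_approx[OF lin coer dense_range_of_perp[OF lin pm]] by blast
      have Cx: "?C x = Some w" using xw(1) closure_op_iff[OF lin cl] by blast
      have x: "x \<in> dom ?C" using Cx by blast
      have eq: "z - \<i> *\<^sub>C y - (w - \<i> *\<^sub>C x) = 0"
        using xw(2) by (simp add: scaleC_minus_left algebra_simps)
      have "y - x = 0"
      proof (rule pp, intro ballI)
        fix u assume u: "u \<in> dom A"
        have uC: "u \<in> dom ?C" using u closure_op_dom_sup[OF lin cl] by blast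
        have Cu: "app ?C u = app A u" by (rule closure_op_app[OF lin cl u])
        have h1: "cinner (app A u) y = cinner u z" using adj[OF uC] Cu by simp
        have h2: "cinner (app A u) x = cinner u w" using symm_onD[OF sC uC x] Cu app_eq[of ?C x w, OF Cx] by simp
        have r: "cinner u (z - \<i> *\<^sub>C y - (w - \<i> *\<^sub>C x)) = cinner u z - \<i> * cinner u y - (cinner u w - \<i> * cinner u x)"
          by (simp only: cinner_diff_right cinner_scaleC_right)
        have l: "cinner (app A u + \<i> *\<^sub>C u) (y - x) = (cinner (app A u) y - cinner (app A u) x) + cnj \<i> * (cinner u y - cinner u x)"
          by (simp only: cinner_add_left cinner_scaleC_left cinner_diff_right) (simp add: algebra_simps)
        have "cinner (app A u + \<i> *\<^sub>C u) (y - x) = cinner u (z - \<i> *\<^sub>C y - (w - \<i> *\<^sub>C x))"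
          unfolding l r h1 h2 by (simp add: algebra_simps)
        also have "\<dots> = 0" using eq by simp
        finally show "cinner (app A u + \<i> *\<^sub>C u) (y - x) = 0" .
      qed
      then have "y = x" by simp
      then show ?thesis using x False by simp
    qed
  qed
  then have "adjoint_op ?C = ?C" by (rule ext)
  then show "self_adjoint ?C" unfolding self_adjoint_def densely_defined_def using linC dC by simp
qed

lemma core_of_perp:
  fixes H :: "'a::chilbert lop"
  assumes sa: "self_adjoint H" and B: "csubspace B" "B \<subseteq> dom H"
    and pp: "\<And>\<phi>. (\<forall>b\<in>B. cinner (app H b + \<i> *\<^sub>C b) \<phi> = 0) \<Longrightarrow> \<phi> = 0"
  shows "is_core H B" "closure (graph_op (H |` B)) = graph_op H"
proof -
  note F = sa_facts[OF sa]
  note LH = linear_opD[OF F(1)]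
  let ?A = "H |` B"
  have domA: "dom ?A = B" using B(2) by auto
  have appA: "app ?A b = app H b" if "b \<in> B" for b using that by (simp add: app_def)
  have linA: "linear_op ?A"
    unfolding linear_op_def domA using B(1) LH(2) LH(3) csubspace_facts[OF B(1)] B(2) appA
    by (smt (verit, best) subset_iff)
  have sub: "closure (graph_op ?A) \<subseteq> graph_op H"
  proof
    fix p assume p: "p \<in> closure (graph_op ?A)"
    obtain x y where "p = (x, y)" by (cases p)
    with p have "(x, y) \<in> closure (graph_op ?A)" by simp
    moreover have "closure (graph_op ?A) \<subseteq> closure (graph_op H)"
      by (rule closure_mono) (auto simp: graph_op_def restrict_map_def split: if_splits)
    ultimately have "H x = Some y" using sa_graph_closure[OF sa] by blast
    then show "p \<in> graph_op H" using \<open>p = (x, y)\<close> by (simp add: graph_op_def)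
  qed
  have coerH: "\<And>x. x \<in> dom H \<Longrightarrow> (norm (app H x + \<i> *\<^sub>C x))^2 = (norm (app H x))^2 + (norm x)^2"
    using coer_symm[OF F(4)] by simp
  have coerA: "\<And>x. x \<in> dom ?A \<Longrightarrow> (norm (app ?A x))^2 + (norm x)^2 \<le> (norm (app ?A x + \<i> *\<^sub>C x))^2"
    using coerH B(2) appA domA by auto
  have ppA: "\<phi> = 0" if "\<forall>b\<in>dom ?A. cinner (app ?A b + \<i> *\<^sub>C b) \<phi> = 0" for \<phi>
    using pp[of \<phi>] that domA appA by simp
  have sup: "graph_op H \<subseteq> closure (graph_op ?A)"
  proof
    fix p assume p: "p \<in> graph_op H"
    obtain \<psi> v where pv: "p = (\<psi>, v)" by (cases p)
    with p have Hpsi: "H \<psi> = Some v" by (simp add: graph_op_def)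
    have psi: "\<psi> \<in> dom H" using Hpsi by blast
    have v: "app H \<psi> = v" using Hpsi by (simp add: app_def)
    obtain x y where xy: "(x, y) \<in> closure (graph_op ?A)" "y + \<i> *\<^sub>C x = app H \<psi> + \<i> *\<^sub>C \<psi>"
      using range_approx[OF linA coerA dense_range_of_perp[OF linA ppA]] by blast
    have Hx: "H x = Some y" using sub xy(1) by (auto simp: graph_op_def)
    have x: "x \<in> dom H" using Hx by blast
    have e1: "app H (x - \<psi>) = y - app H \<psi>" using LH(4)[OF x psi] app_eq[of H x y, OF Hx] by simp
    have "app H (x - \<psi>) + \<i> *\<^sub>C (x - \<psi>) = (y + \<i> *\<^sub>C x) - (app H \<psi> + \<i> *\<^sub>C \<psi>)"
      unfolding e1 scaleC_diff_right by (simp add: algebra_simps)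
    then have "app H (x - \<psi>) + \<i> *\<^sub>C (x - \<psi>) = 0" using xy(2) by simp
    then have "(norm (app H (x - \<psi>)))^2 + (norm (x - \<psi>))^2 = 0"
      using coerH[OF LH(8)[OF x psi]] by simp
    then have "norm (x - \<psi>) = 0" by (smt (verit) zero_le_power2 power_eq_0_iff)
    then have "x = \<psi>" by simp
    then show "p \<in> closure (graph_op ?A)" using xy(1) pv Hx Hpsi by simp
  qed
  show eqg: "closure (graph_op ?A) = graph_op H" using sub sup by blast
  have "closure_op ?A = H"
  proof
    fix x
    show "closure_op ?A x = H x"
    proof (cases "H x")
      case None then show ?thesis unfolding closure_op_def eqg by (simp add: graph_op_def)
    next
      case (Some v)
      have "(THE y. (x, y) \<in> graph_op H) = v" using Some by (simp add: graph_op_def)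
      then show ?thesis unfolding closure_op_def eqg using Some by (auto simp: graph_op_def)
    qed
  qed
  then show "is_core H B" unfolding is_core_def using B(2) by simp
qed

lemma ug_facts:
  fixes H :: "'a::chilbert lop"
  assumes ug: "unitary_group_of H U"
  shows "\<And>t x y. U t (x + y) = U t x + U t y"
    "\<And>t c x. U t (c *\<^sub>C x) = c *\<^sub>C U t x"
    "\<And>t x y. cinner (U t x) (U t y) = cinner x y"
    "\<And>t x. norm (U t x) = norm x"
    "\<And>t. bounded_linear (U t)"
    "\<And>s t x. U (s + t) x = U s (U t x)"
    "\<And>x. U 0 x = x"
    "\<And>x. x \<in> dom H \<longleftrightarrow> (\<exists>v. ((\<lambda>t. U t x) has_vector_derivative v) (at 0))"
    "\<And>x. x \<in> dom H \<Longrightarrow> ((\<lambda>t. U t x) has_vector_derivative (\<i> *\<^sub>C app H x)) (at 0)"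
proof -
  have lin: "\<And>t. linear_op (\<lambda>x. Some (U t x))" using ug unfolding unitary_group_of_def by blast
  have app: "\<And>t x. app (\<lambda>x. Some (U t x)) x = U t x" by (simp add: app_def)
  have dom: "\<And>t. dom (\<lambda>x. Some (U t x)) = UNIV" by auto
  show add: "\<And>t x y. U t (x + y) = U t x + U t y"
    using linear_opD(2)[OF lin] app dom by (metis UNIV_I)
  show sc: "\<And>t c x. U t (c *\<^sub>C x) = c *\<^sub>C U t x"
    using linear_opD(3)[OF lin] app dom by (metis UNIV_I)
  show ci: "\<And>t x y. cinner (U t x) (U t y) = cinner x y" using ug unfolding unitary_group_of_def by blast
  show nm: "\<And>t x. norm (U t x) = norm x" by (simp add: norm_eq_sqrt_cinner ci)
  show "\<And>t. bounded_linear (U t)"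
  proof -
    fix t
    show "bounded_linear (U t)"
    proof
      show "U t (x + y) = U t x + U t y" for x y by (rule add)
      show "U t (scaleR r x) = scaleR r (U t x)" for r x by (simp add: scaleR_scaleC sc)
      show "\<exists>K. \<forall>x. norm (U t x) \<le> norm x * K" by (rule exI[of _ 1]) (simp add: nm)
    qed
  qed
  show "\<And>s t x. U (s + t) x = U s (U t x)" using ug unfolding unitary_group_of_def by (simp add: o_def)
  show "\<And>x. U 0 x = x" using ug unfolding unitary_group_of_def by simp
  show "\<And>x. x \<in> dom H \<longleftrightarrow> (\<exists>v. ((\<lambda>t. U t x) has_vector_derivative v) (at 0))"
    using ug unfolding unitary_group_of_def by blast
  show "\<And>x. x \<in> dom H \<Longrightarrow> ((\<lambda>t. U t x) has_vector_derivative (\<i> *\<^sub>C app H x)) (at 0)"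
    using ug unfolding unitary_group_of_def by blast
qed

lemma ug_deriv:
  fixes H :: "'a::chilbert lop"
  assumes ug: "unitary_group_of H U" and y: "y \<in> dom H"
  shows "((\<lambda>t. U t y) has_vector_derivative U s (\<i> *\<^sub>C app H y)) (at s)"
proof -
  note UF = ug_facts[OF ug]
  have g: "((\<lambda>h. U s (U h y)) has_vector_derivative U s (\<i> *\<^sub>C app H y)) (at 0)"
    by (rule bounded_linear.has_vector_derivative[OF UF(5) UF(9)[OF y]])
  have "((\<lambda>t. t - s) has_real_derivative 1) (at s)" by (auto intro!: derivative_eq_intros)
  then have f: "((\<lambda>t. t - s) has_vector_derivative 1) (at s)"
    by (simp add: has_real_derivative_iff_has_vector_derivative)
  have "(((\<lambda>h. U s (U h y)) \<circ> (\<lambda>t. t - s)) has_vector_derivative (1 *\<^sub>R U s (\<i> *\<^sub>C app H y))) (at s)"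
    by (rule vector_diff_chain_at[OF f]) (simp add: g)
  moreover have "((\<lambda>h. U s (U h y)) \<circ> (\<lambda>t. t - s)) = (\<lambda>t. U t y)"
    by (rule ext) (simp add: UF(6)[symmetric])
  ultimately show ?thesis by simp
qed

lemma ug_commute:
  fixes H :: "'a::chilbert lop"
  assumes ug: "unitary_group_of H U" and y: "y \<in> dom H"
  shows "U s y \<in> dom H" "app H (U s y) = U s (app H y)"
proof -
  note UF = ug_facts[OF ug]
  have g: "((\<lambda>h. U s (U h y)) has_vector_derivative U s (\<i> *\<^sub>C app H y)) (at 0)"
    by (rule bounded_linear.has_vector_derivative[OF UF(5) UF(9)[OF y]])
  moreover have "(\<lambda>h. U s (U h y)) = (\<lambda>h. U h (U s y))"
    by (rule ext) (metis UF(6) add.commute)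
  ultimately have d: "((\<lambda>h. U h (U s y)) has_vector_derivative U s (\<i> *\<^sub>C app H y)) (at 0)" by simp
  then show us: "U s y \<in> dom H" using UF(8) by blast
  have "\<i> *\<^sub>C app H (U s y) = U s (\<i> *\<^sub>C app H y)"
    using vector_derivative_unique_at[OF UF(9)[OF us] d] .
  then have "(- \<i>) *\<^sub>C (\<i> *\<^sub>C app H (U s y)) = (- \<i>) *\<^sub>C (\<i> *\<^sub>C U s (app H y))" by (simp add: UF(2))
  then show "app H (U s y) = U s (app H y)" by (simp add: scaleC_scaleC scaleC_one)
qed

lemma bounded_exp_zero:
  fixes a :: complex and M :: real
  assumes "\<And>t::real. cmod a * exp t \<le> M"
  shows "a = 0"
proof (rule ccontr)
  assume "a \<noteq> 0"
  then have pos: "cmod a > 0" by simp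
  define t where "t = ln ((\<bar>M\<bar> + 1) / cmod a)"
  have "exp t = (\<bar>M\<bar> + 1) / cmod a" unfolding t_def using pos by (simp add: add_pos_nonneg)
  then have "cmod a * exp t = \<bar>M\<bar> + 1" using pos by simp
  then show False using assms[of t] by linarith
qed

lemma perp_U_case:
  fixes H :: "'a::chilbert lop"
  assumes ug: "unitary_group_of H U" and B: "B \<subseteq> dom H" "dense_set B" "\<forall>t. U t ` B \<subseteq> B"
    and perp: "\<forall>b\<in>B. cinner (app H b + \<i> *\<^sub>C b) \<phi> = 0"
  shows "\<phi> = 0"
proof (rule perp_dense_zero[OF B(2)])
  note UF = ug_facts[OF ug]
  fix b assume b: "b \<in> B"
  define F where "F t = cinner (U t b) \<phi>" for t
  have UB: "U t b \<in> B" for t using B(3) b by blast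
  have bl: "bounded_linear (\<lambda>x. cinner x \<phi>)"
    by (rule bounded_bilinear.bounded_linear_left[OF bounded_bilinear_cinner])
  have Fd: "(F has_vector_derivative F t) (at t)" for t
  proof -
    have "(F has_vector_derivative cinner (U t (\<i> *\<^sub>C app H b)) \<phi>) (at t)"
      unfolding F_def by (rule bounded_linear.has_vector_derivative[OF bl ug_deriv[OF ug B(1)[THEN subsetD, OF b]]])
    moreover have "cinner (U t (\<i> *\<^sub>C app H b)) \<phi> = F t"
    proof -
      have hb: "b \<in> dom H" using B(1) b by blast
      have p: "cinner (app H (U t b) + \<i> *\<^sub>C U t b) \<phi> = 0" using perp UB by blast
      then have p2: "cinner (app H (U t b)) \<phi> + cnj \<i> * F t = 0"
        unfolding F_def by (simp only: cinner_add_left cinner_scaleC_left)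
      have u: "U t (\<i> *\<^sub>C app H b) = \<i> *\<^sub>C app H (U t b)"
        by (simp only: UF(2) ug_commute(2)[OF ug hb])
      have "cinner (U t (\<i> *\<^sub>C app H b)) \<phi> = cnj \<i> * cinner (app H (U t b)) \<phi>"
        by (simp only: u cinner_scaleC_left)
      also have "cinner (app H (U t b)) \<phi> = \<i> * F t"
        using p2 by (simp add: eq_neg_iff_add_eq_0[symmetric])
      finally show ?thesis by simp
    qed
    ultimately show ?thesis by simp
  qed
  define G where "G t = exp (- t) *\<^sub>R F t" for t
  have Gd: "(G has_vector_derivative 0) (at t within UNIV)" for t
  proof -
    have "((\<lambda>t. exp (- t)) has_field_derivative (exp (- t) * (- 1))) (at t)"
      by (intro derivative_eq_intros) auto
    from has_vector_derivative_scaleR[OF this Fd]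
    show ?thesis unfolding G_def by simp
  qed
  obtain k where k: "\<And>t. t \<in> UNIV \<Longrightarrow> G t = k"
    by (rule has_vector_derivative_zero_constant[of UNIV G]) (auto simp: Gd)
  have Fexp: "F t = exp t *\<^sub>R F 0" for t
  proof -
    have "G t = G 0" using k by simp
    then have "exp (- t) *\<^sub>R F t = F 0" unfolding G_def by simp
    then have "exp t *\<^sub>R (exp (- t) *\<^sub>R F t) = exp t *\<^sub>R F 0" by simp
    then show ?thesis by (simp add: exp_minus)
  qed
  have "cmod (F 0) * exp t \<le> norm b * norm \<phi>" for t
  proof -
    have "cmod (F t) \<le> norm b * norm \<phi>" unfolding F_def using cauchy_schwarz[of "U t b" \<phi>] UF(4) by simp
    then show ?thesis using Fexp[of t] by (simp add: mult.commute)
  qed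
  then have "F 0 = 0" by (rule bounded_exp_zero)
  then show "cinner b \<phi> = 0" unfolding F_def using UF(7) by simp
qed

lemma taylor_real_family:
  fixes g :: "nat \<Rightarrow> real \<Rightarrow> real" and M :: "nat \<Rightarrow> real"
  assumes der: "\<And>k \<tau>. DERIV (g k) \<tau> :> g (Suc k) \<tau>"
    and bnd: "\<And>k \<tau>. \<bar>g k \<tau>\<bar> \<le> M k"
    and lim: "(\<lambda>n. M n * d^n / fact n) \<longlonglongrightarrow> 0"
    and ts: "\<bar>t - s\<bar> \<le> d" and init: "\<And>k. g k s = c"
  shows "g 0 t = c * exp (t - s)"
proof (cases "t = s")
  case True then show ?thesis using init by simp
next
  case False
  define P where "P n = (\<Sum>m<n. (c / fact m) * (t - s)^m)" for n
  have err: "\<bar>g 0 t - P n\<bar> \<le> M n * d^n / fact n" for n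
  proof (cases "n = 0")
    case True then show ?thesis using bnd[of 0 t] by (simp add: P_def)
  next
    case False
    then have n: "n > 0" by simp
    obtain \<tau> where \<tau>: "g 0 t = (\<Sum>m<n. (g m s / fact m) * (t - s)^m) + (g n \<tau> / fact n) * (t - s)^n"
      using Taylor[where diff = g and f = "g 0" and a = "min s t" and b = "max s t" and c = s and x = t and n = n]
        n der \<open>t \<noteq> s\<close> by fastforce
    have "g 0 t - P n = (g n \<tau> / fact n) * (t - s)^n" using \<tau> init by (simp add: P_def)
    also have "\<bar>\<dots>\<bar> = \<bar>g n \<tau>\<bar> * \<bar>t - s\<bar>^n / fact n" by (simp add: abs_mult power_abs)
    also have "\<dots> \<le> M n * d^n / fact n"
    proof (rule divide_right_mono[OF mult_mono])
      show "\<bar>g n \<tau>\<bar> \<le> M n" by (rule bnd)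
      show "\<bar>t - s\<bar>^n \<le> d^n" using ts by (intro power_mono) auto
      show "0 \<le> M n" using bnd[of n \<tau>] by linarith
    qed auto
    finally show ?thesis .
  qed
  have l0: "(\<lambda>n. g 0 t - P n) \<longlonglongrightarrow> 0"
    by (rule Lim_null_comparison[OF _ lim]) (use err in auto)
  have p1: "P \<longlonglongrightarrow> g 0 t"
    using tendsto_diff[OF tendsto_const[of "g 0 t"] l0] by simp
  have "(\<lambda>m. c * ((t - s)^m /\<^sub>R fact m)) sums (c * exp (t - s))"
    by (rule sums_mult[OF exp_converges])
  then have p2: "P \<longlonglongrightarrow> c * exp (t - s)"
    unfolding sums_def P_def by (simp add: divide_inverse mult_ac)
  show ?thesis using LIMSEQ_unique[OF p1 p2] .
qed

lemma taylor_cx_family: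
  fixes f :: "nat \<Rightarrow> real \<Rightarrow> complex" and M :: "nat \<Rightarrow> real"
  assumes der: "\<And>k \<tau>. (f k has_vector_derivative f (Suc k) \<tau>) (at \<tau>)"
    and bnd: "\<And>k \<tau>. cmod (f k \<tau>) \<le> M k"
    and lim: "(\<lambda>n. M (j + n) * d^n / fact n) \<longlonglongrightarrow> 0"
    and ts: "\<bar>t - s\<bar> \<le> d" and init: "\<And>k. f k s = c"
  shows "f j t = exp (t - s) *\<^sub>R c"
proof -
  have re: "Re (f j t) = Re c * exp (t - s)"
  proof -
    have "(\<lambda>k \<tau>. Re (f (j + k) \<tau>)) 0 t = Re c * exp (t - s)"
    proof (rule taylor_real_family[where M = "\<lambda>k. M (j + k)" and d = d])
      fix k \<tau> show "DERIV (\<lambda>\<tau>. Re (f (j + k) \<tau>)) \<tau> :> Re (f (j + Suc k) \<tau>)"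
        using has_field_derivative_Re[OF der[of "j + k" \<tau>]] by simp
      show "\<bar>Re (f (j + k) \<tau>)\<bar> \<le> M (j + k)" using abs_Re_le_cmod bnd order_trans by blast
    qed (use lim ts init in auto)
    then show ?thesis by simp
  qed
  have im: "Im (f j t) = Im c * exp (t - s)"
  proof -
    have "(\<lambda>k \<tau>. Im (f (j + k) \<tau>)) 0 t = Im c * exp (t - s)"
    proof (rule taylor_real_family[where M = "\<lambda>k. M (j + k)" and d = d])
      fix k \<tau> show "DERIV (\<lambda>\<tau>. Im (f (j + k) \<tau>)) \<tau> :> Im (f (j + Suc k) \<tau>)"
        using has_field_derivative_Im[OF der[of "j + k" \<tau>]] by simp
      show "\<bar>Im (f (j + k) \<tau>)\<bar> \<le> M (j + k)" using abs_Im_le_cmod bnd order_trans by blast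
    qed (use lim ts init in auto)
    then show ?thesis by simp
  qed
  show ?thesis using re im by (simp add: complex_eq_iff mult.commute)
qed

lemma fact_sum_bound: "fact (n + j) \<le> (4::real)^n * 2^j * fact j * fact n"
proof -
  have "fact n * fact j * ((n + j) choose n) = (fact (n + j) :: nat)"
    using binomial_fact_lemma[of n "n + j"] by simp
  moreover have "((n + j) choose n) \<le> 2^(n + j)" by (rule binomial_le_pow2)
  ultimately have "(fact (n + j) :: nat) \<le> fact n * fact j * 2^(n + j)"
    by (metis mult_le_mono2)
  also have "(2::nat)^(n + j) \<le> 4^n * 2^j"
  proof -
    have "(2::nat)^(n + j) = 2^n * 2^j" by (simp add: power_add)
    also have "\<dots> \<le> 4^n * 2^j" by (intro mult_le_mono1 power_mono) auto
    finally show ?thesis .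
  qed
  then have "fact n * fact j * (2::nat)^(n + j) \<le> fact n * fact j * (4^n * 2^j)" by simp
  finally have "(fact (n + j) :: nat) \<le> 4^n * 2^j * fact j * fact n" by (simp add: mult_ac)
  then have "real (fact (n + j)) \<le> real (4^n * 2^j * fact j * fact n)" by (simp only: of_nat_le_iff)
  then show ?thesis by (simp add: of_nat_fact)
qed

lemma shift_lim:
  fixes M :: "nat \<Rightarrow> real"
  assumes M0: "\<And>k. 0 \<le> M k" and r: "r > 0" and lim: "(\<lambda>n. M n * r^n / fact n) \<longlonglongrightarrow> 0"
  shows "(\<lambda>n. M (j + n) * (r/4)^n / fact n) \<longlonglongrightarrow> 0"
proof -
  define C where "C = 2^j * fact j / r^j"
  have a: "(\<lambda>n. M (n + j) * r^(n + j) / fact (n + j)) \<longlonglongrightarrow> 0"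
    using LIMSEQ_ignore_initial_segment[OF lim, of j] by simp
  have g: "(\<lambda>n. M (n + j) * r^(n + j) / fact (n + j) * C) \<longlonglongrightarrow> 0"
    by (rule tendsto_mult_left_zero[OF a])
  show ?thesis
  proof (rule Lim_null_comparison[OF _ g], rule always_eventually, rule allI)
    fix n
    have f: "fact (n + j) \<le> (4::real)^n * 2^j * fact j * fact n" by (rule fact_sum_bound)
    have pos: "(0::real) < fact n" "(0::real) < fact (n + j)" "0 < r^n" "0 < r^j" "(0::real) < 4^n" using r by auto
    have "(r/4)^n / fact n \<le> r^(n + j) / fact (n + j) * C"
    proof -
      have "(r/4)^n / fact n = r^n / (4^n * fact n)" by (simp add: power_divide)
      also have "\<dots> \<le> r^n * (2^j * fact j) / fact (n + j)"
        using f pos by (simp add: field_simps)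
      also have "\<dots> = r^(n + j) / fact (n + j) * C"
        unfolding C_def using pos r by (simp add: power_add field_simps)
      finally show ?thesis .
    qed
    then have "M (j + n) * ((r/4)^n / fact n) \<le> M (j + n) * (r^(n + j) / fact (n + j) * C)"
      using M0[of "j + n"] by (rule mult_left_mono)
    then have "M (j + n) * ((r/4)^n / fact n) \<le> M (n + j) * (r^(n + j) / fact (n + j) * C)"
      by (simp only: add.commute)
    moreover have "0 \<le> M (j + n) * (r/4)^n / fact n" using M0[of "j + n"] r by simp
    moreover have "M (n + j) * (r^(n + j) / fact (n + j) * C) = M (n + j) * r^(n + j) / fact (n + j) * C"
      by simp
    ultimately show "norm (M (j + n) * (r/4)^n / fact n) \<le> M (n + j) * r^(n + j) / fact (n + j) * C"
      unfolding real_norm_def by (metis abs_of_nonneg times_divide_eq_right)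
  qed
qed

lemma analytic_family_zero:
  fixes f :: "nat \<Rightarrow> real \<Rightarrow> complex" and M :: "nat \<Rightarrow> real"
  assumes der: "\<And>k \<tau>. (f k has_vector_derivative f (Suc k) \<tau>) (at \<tau>)"
    and bnd: "\<And>k \<tau>. cmod (f k \<tau>) \<le> M k"
    and r: "r > 0" and lim: "(\<lambda>n. M n * r^n / fact n) \<longlonglongrightarrow> 0"
    and init: "\<And>k. f k 0 = f 0 0"
  shows "f 0 0 = 0"
proof -
  define d where "d = r / 4"
  have d: "d > 0" using r by (simp add: d_def)
  have M0: "0 \<le> M k" for k using bnd[of k 0] norm_ge_zero order_trans by blast
  have limj: "(\<lambda>n. M (j + n) * d^n / fact n) \<longlonglongrightarrow> 0" for j
    unfolding d_def by (rule shift_lim[OF M0 r lim])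
  have step: "\<forall>k. f k (real N * d) = exp (real N * d) *\<^sub>R f 0 0" for N
  proof (induction N)
    case 0 then show ?case using init by simp
  next
    case (Suc N)
    show ?case
    proof
      fix k
      have "f k (real (Suc N) * d) = exp (real (Suc N) * d - real N * d) *\<^sub>R (exp (real N * d) *\<^sub>R f 0 0)"
        by (rule taylor_cx_family[OF der bnd limj]) (use Suc d in \<open>auto simp: algebra_simps\<close>)
      also have "\<dots> = exp (real (Suc N) * d) *\<^sub>R f 0 0"
        by (simp add: exp_add[symmetric] algebra_simps)
      finally show "f k (real (Suc N) * d) = exp (real (Suc N) * d) *\<^sub>R f 0 0" .
    qed
  qed
  have "cmod (f 0 0) * exp t \<le> M 0" for t
  proof -
    obtain N :: nat where N: "t / d \<le> real N" using real_arch_simple by blast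
    then have "t \<le> real N * d" using d by (simp add: field_simps)
    then have "exp t \<le> exp (real N * d)" by simp
    then have "cmod (f 0 0) * exp t \<le> cmod (f 0 0) * exp (real N * d)" by (simp add: mult_left_mono)
    also have "\<dots> = cmod (f 0 (real N * d))" using step[of N] by simp
    also have "\<dots> \<le> M 0" by (rule bnd)
    finally show ?thesis .
  qed
  then show ?thesis by (rule bounded_exp_zero)
qed

lemma perp_analytic_case:
  fixes H :: "'a::chilbert lop"
  assumes ug: "unitary_group_of H U" and B: "B \<subseteq> dom H" "\<forall>x\<in>B. app H x \<in> B"
    and S: "S \<subseteq> B" "dense_set S" "\<forall>x\<in>S. analytic_vector H x"
    and perp: "\<forall>b\<in>B. cinner (app H b + \<i> *\<^sub>C b) \<phi> = 0"
  shows "\<phi> = 0"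
proof (rule perp_dense_zero[OF S(2)])
  note UF = ug_facts[OF ug]
  fix x assume x: "x \<in> S"
  define hp where "hp n = app (op_pow H n) x" for n
  have hpB: "op_pow H n x = Some (hp n) \<and> hp n \<in> B" for n
  proof (induction n)
    case 0 then show ?case using x S(1) by (auto simp: hp_def app_def)
  next
    case (Suc n)
    then have h: "op_pow H n x = Some (hp n)" "hp n \<in> B" by auto
    have "op_pow H (Suc n) x = H (hp n)" using h(1) by (simp add: map_comp_def)
    also have "\<dots> = Some (app H (hp n))" using h(2) B(1) by (auto simp: app_def)
    finally have e: "op_pow H (Suc n) x = Some (app H (hp n))" .
    then have "hp (Suc n) = app H (hp n)" by (simp add: hp_def app_def)
    then show ?case using e B(2) h(2) by simp
  qed
  have hpS: "hp (Suc n) = app H (hp n)" for n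
  proof -
    have "op_pow H (Suc n) x = H (hp n)" using hpB[of n] by (simp add: map_comp_def)
    then show ?thesis using hpB[of "Suc n"] hpB[of n] B(1) by (auto simp: app_def)
  qed
  have hpH: "hp n \<in> dom H" for n using hpB B(1) by blast
  define g where "g k t = cinner (U t (hp k)) \<phi>" for k t
  define f where "f k t = (- \<i>)^k * g k t" for k t
  have bl: "bounded_linear (\<lambda>x. cinner x \<phi>)"
    by (rule bounded_bilinear.bounded_linear_left[OF bounded_bilinear_cinner])
  have gd: "(g k has_vector_derivative (- \<i>) * g (Suc k) t) (at t)" for k t
  proof -
    have "(g k has_vector_derivative cinner (U t (\<i> *\<^sub>C app H (hp k))) \<phi>) (at t)"
      unfolding g_def by (rule bounded_linear.has_vector_derivative[OF bl ug_deriv[OF ug hpH]])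
    moreover have "cinner (U t (\<i> *\<^sub>C app H (hp k))) \<phi> = (- \<i>) * g (Suc k) t"
      unfolding g_def hpS by (simp add: UF(2) cinner_scaleC_left)
    ultimately show ?thesis by simp
  qed
  have fd: "(f k has_vector_derivative f (Suc k) t) (at t)" for k t
  proof -
    have "((\<lambda>t. (- \<i>)^k * g k t) has_vector_derivative (- \<i>)^k * ((- \<i>) * g (Suc k) t)) (at t)"
      by (rule has_vector_derivative_mult_right[OF gd])
    moreover have "(- \<i>)^k * ((- \<i>) * g (Suc k) t) = f (Suc k) t" unfolding f_def by (simp only: power_Suc mult_ac)
    moreover have "f k = (\<lambda>t. (- \<i>)^k * g k t)" unfolding f_def by (rule refl)
    ultimately show ?thesis by (simp only:)
  qed
  define M where "M k = norm (hp k) * norm \<phi>" for k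
  have bnd: "cmod (f k t) \<le> M k" for k t
  proof -
    have "cmod (g k t) \<le> norm (U t (hp k)) * norm \<phi>" unfolding g_def by (rule cauchy_schwarz)
    then show ?thesis unfolding f_def M_def by (simp add: norm_mult norm_power UF(4))
  qed
  have g0: "g k 0 = \<i>^k * g 0 0" for k
  proof (induction k)
    case 0 then show ?case by simp
  next
    case (Suc k)
    have p: "cinner (app H (hp k) + \<i> *\<^sub>C hp k) \<phi> = 0" using perp hpB by blast
    then have p2: "cinner (app H (hp k)) \<phi> + cnj \<i> * cinner (hp k) \<phi> = 0"
      by (simp only: cinner_add_left cinner_scaleC_left)
    have "g (Suc k) 0 = cinner (app H (hp k)) \<phi>" unfolding g_def hpS by (simp add: UF(7))
    also have "\<dots> = \<i> * cinner (hp k) \<phi>" using p2 by (simp add: eq_neg_iff_add_eq_0[symmetric])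
    also have "cinner (hp k) \<phi> = g k 0" unfolding g_def by (simp add: UF(7))
    finally show ?case using Suc by simp
  qed
  have init: "f k 0 = f 0 0" for k
  proof -
    have "f k 0 = (- \<i>)^k * (\<i>^k * g 0 0)" unfolding f_def by (simp only: g0[of k])
    also have "\<dots> = ((- \<i>) * \<i>)^k * g 0 0" by (simp only: power_mult_distrib mult.assoc)
    finally have "f k 0 = ((- \<i>) * \<i>)^k * g 0 0" .
    then show ?thesis unfolding f_def by simp
  qed
  obtain r where r: "r > 0" "summable (\<lambda>n. r^n * norm (app (op_pow H n) x) / fact n)"
    using S(3) x unfolding analytic_vector_def by blast
  have lim: "(\<lambda>n. M n * r^n / fact n) \<longlonglongrightarrow> 0"
  proof -
    have "(\<lambda>n. r^n * norm (hp n) / fact n) \<longlonglongrightarrow> 0"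
      using summable_LIMSEQ_zero[OF r(2)] unfolding hp_def .
    from tendsto_mult_right_zero[OF this, of "norm \<phi>"]
    show ?thesis unfolding M_def by (simp add: mult_ac)
  qed
  have "f 0 0 = 0" by (rule analytic_family_zero[OF fd bnd r(1) lim init])
  then show "cinner x \<phi> = 0" unfolding f_def g_def using hpB[of 0] by (simp add: UF(7) hp_def app_def)
qed

lemma part2:
  fixes H X :: "'a::chilbert lop"
  assumes sa: "self_adjoint H" and B: "csubspace B" "B \<subseteq> dom H" "dense_set B"
    and cg: "closure (graph_op (H |` B)) = graph_op H"
    and X: "symmetric_op X" "B \<subseteq> dom X" "\<forall>x\<in>B. app X x \<in> dom X" "(X \<circ>\<^sub>m X) |` B = H |` B"
  shows "ess_self_adjoint (X |` B) \<and> closure_op (X |` B) = closure_op X \<and>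
      closure_op X \<circ>\<^sub>m closure_op X = H \<and> nonneg_op H \<and> dom H \<subseteq> dom (closure_op X)"
proof -
  note F = sa_facts[OF sa]
  note LH = linear_opD[OF F(1)]
  note SB = csubspace_facts[OF B(1)]
  have linX: "linear_op X" and dX: "dense_set (dom X)" and symX: "symm_on X"
    using X(1) unfolding symmetric_op_def densely_defined_def symm_on_def by auto
  note LX = linear_opD[OF linX]
  have clX: "closable X" by (rule closable_of_symm[OF dX symX])
  let ?Xc = "closure_op X"
  have linXc: "linear_op ?Xc" by (rule closure_op_linear[OF linX clX])
  have symXc: "symm_on ?Xc" by (rule closure_op_symm[OF linX clX symX])
  let ?A = "X |` B"
  have domA: "dom ?A = B" using X(2) by auto
  have appA: "app ?A b = app X b" if "b \<in> B" for b using that by (simp add: app_def)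
  have linA: "linear_op ?A"
    unfolding linear_op_def domA using B(1) LX(2) LX(3) SB X(2) appA
    by (smt (verit, best) subset_iff)
  have symA: "symm_on ?A" unfolding symm_on_def domA using symX X(2) appA
    by (simp add: subset_iff symm_on_def)
  have dA: "dense_set (dom ?A)" using B(3) domA by simp
  have clA: "closable ?A" by (rule closable_of_symm[OF dA symA])
  let ?C = "closure_op ?A"
  have XX: "app X (app X b) = app H b" if b: "b \<in> B" for b
  proof -
    have "(X \<circ>\<^sub>m X) b = H b" using fun_cong[OF X(4), of b] b by simp
    moreover have "X b = Some (app X b)" using X(2) b by (intro dom_app) blast
    then have "(X \<circ>\<^sub>m X) b = X (app X b)" by (simp add: map_comp_def)
    ultimately have "X (app X b) = Some (app H b)" using dom_app[of b H] B(2) b by auto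
    then show ?thesis by (simp add: app_def)
  qed
  have normX: "norm (app X u) \<le> norm u + norm (app H u)" if u: "u \<in> B" for u
  proof -
    have uX: "u \<in> dom X" "app X u \<in> dom X" using u X(2) X(3) by auto
    have "(norm (app X u))^2 = Re (cinner (app X u) (app X u))" by (simp add: cinner_self_Re)
    also have "cinner (app X u) (app X u) = cinner u (app H u)"
      using symm_onD[OF symX uX(1) uX(2)] XX[OF u] by simp
    also have "Re (cinner u (app H u)) \<le> norm u * norm (app H u)"
      using cauchy_schwarz[of u "app H u"] abs_Re_le_cmod[of "cinner u (app H u)"] by linarith
    also have "\<dots> \<le> (norm u + norm (app H u))^2" by (simp add: power2_eq_square algebra_simps)
    finally show ?thesis by (rule power2_le_imp_le) simp
  qed
  have S1: "\<exists>v. (\<psi>, v) \<in> closure (graph_op ?A) \<and> (v, app H \<psi>) \<in> closure (graph_op X)" if psi: "\<psi> \<in> dom H" for \<psi>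
  proof -
    have "(\<psi>, app H \<psi>) \<in> graph_op H" using dom_app[OF psi] by (simp add: graph_op_def)
    then have "(\<psi>, app H \<psi>) \<in> closure (graph_op (H |` B))" using cg by simp
    then obtain b where b0: "\<And>n. b n \<in> dom (H |` B)" "b \<longlonglongrightarrow> \<psi>" "(\<lambda>n. app (H |` B) (b n)) \<longlonglongrightarrow> app H \<psi>"
      unfolding graph_closure_iff by blast
    have bB: "\<And>n. b n \<in> B" using b0(1) by auto
    have Hb: "(\<lambda>n. app H (b n)) \<longlonglongrightarrow> app H \<psi>" using b0(3) bB by (simp add: app_def)
    have "Cauchy (\<lambda>n. app X (b n))"
    proof (rule cauchy_dominated2[OF _ LIMSEQ_imp_Cauchy[OF b0(2)] LIMSEQ_imp_Cauchy[OF Hb]])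
      fix m n
      have d: "b m - b n \<in> B" using SB(4) bB by blast
      have "app X (b m) - app X (b n) = app X (b m - b n)" using LX(4) X(2) bB by (metis subsetD)
      moreover have "app H (b m) - app H (b n) = app H (b m - b n)" using LH(4) B(2) bB by (metis subsetD)
      ultimately show "dist (app X (b m)) (app X (b n)) \<le> dist (b m) (b n) + dist (app H (b m)) (app H (b n))"
        using normX[OF d] by (simp add: dist_norm)
    qed
    then obtain v where v: "(\<lambda>n. app X (b n)) \<longlonglongrightarrow> v" by (rule cauchy_lim)
    have "(\<psi>, v) \<in> closure (graph_op ?A)" unfolding graph_closure_iff
      using bB domA appA b0(2) v by (intro exI[of _ b]) simp
    moreover have "(v, app H \<psi>) \<in> closure (graph_op X)" unfolding graph_closure_iff
      using X(3) bB XX Hb v by (intro exI[of _ "\<lambda>n. app X (b n)"]) simp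
    ultimately show ?thesis by blast
  qed
  have sub: "closure (graph_op ?A) \<subseteq> closure (graph_op X)"
    by (rule closure_mono) (auto simp: graph_op_def restrict_map_def split: if_splits)
  have CXc: "?Xc y = Some z" if "?C y = Some z" for y z
    using that closure_op_iff[OF linA clA] closure_op_iff[OF linX clX] sub by blast
  have S1': "\<exists>v. ?C \<psi> = Some v \<and> ?Xc \<psi> = Some v \<and> ?Xc v = Some (app H \<psi>)" if psi: "\<psi> \<in> dom H" for \<psi>
  proof -
    obtain v where "(\<psi>, v) \<in> closure (graph_op ?A)" "(v, app H \<psi>) \<in> closure (graph_op X)" using S1[OF psi] by blast
    then show ?thesis using closure_op_iff[OF linA clA] closure_op_iff[OF linX clX] CXc by blast
  qed
  have domHXc: "dom H \<subseteq> dom ?Xc" using S1' by blast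
  have nonneg: "cinner \<psi> (app H \<psi>) \<in> \<real> \<and> 0 \<le> Re (cinner \<psi> (app H \<psi>))" if psi: "\<psi> \<in> dom H" for \<psi>
  proof -
    obtain v where v: "?Xc \<psi> = Some v" "?Xc v = Some (app H \<psi>)" using S1'[OF psi] by blast
    have "cinner \<psi> (app H \<psi>) = cinner \<psi> (app ?Xc v)" using v(2) by (simp add: app_def)
    also have "\<dots> = cinner (app ?Xc \<psi>) v" using symm_onD[OF symXc, of \<psi> v] v by (simp add: domIff)
    also have "\<dots> = cinner v v" using v(1) by (simp add: app_def)
    also have "\<dots> = of_real ((norm v)^2)" by (rule cinner_self)
    finally show ?thesis by simp
  qed
  have nn: "nonneg_op H" unfolding nonneg_op_def using nonneg by blast
  have surj1: "\<exists>\<psi>\<in>dom H. app H \<psi> + \<psi> = \<eta>" for \<eta>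
  proof -
    have coer: "(norm (app H x))^2 + (norm x)^2 \<le> (norm (app H x + 1 *\<^sub>C x))^2" if x: "x \<in> dom H" for x
    proof -
      have "Re (cinner (app H x) x) = Re (cinner x (app H x))" by (rule cinner_cnj_Re)
      then have "0 \<le> Re (cinner (app H x) x)" using nonneg[OF x] by simp
      then show ?thesis by (simp add: scaleC_one norm_sq_add)
    qed
    have pp1: "\<phi> = 0" if h: "\<forall>b\<in>dom H. cinner (app H b + 1 *\<^sub>C b) \<phi> = 0" for \<phi>
    proof -
      have "\<forall>x\<in>dom H. cinner (app H x) \<phi> = cinner x (- \<phi>)"
        using h by (simp add: scaleC_one cinner_add_left cinner_minus_right eq_neg_iff_add_eq_0)
      then have Hp: "H \<phi> = Some (- \<phi>)" using F(3) by blast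
      then have p: "\<phi> \<in> dom H" by blast
      have "0 \<le> Re (cinner \<phi> (app H \<phi>))" using nonneg[OF p] by simp
      also have "app H \<phi> = - \<phi>" using Hp by (simp add: app_def)
      finally have "0 \<le> - ((norm \<phi>)^2)" by (simp add: cinner_minus_right cinner_self_Re)
      then show ?thesis by simp
    qed
    obtain x y where xy: "(x, y) \<in> closure (graph_op H)" "y + 1 *\<^sub>C x = \<eta>"
      using range_approx[OF F(1) coer dense_range_of_perp[OF F(1) pp1]] by blast
    have "H x = Some y" by (rule sa_graph_closure[OF sa xy(1)])
    then show ?thesis using xy(2) by (intro bexI[of _ x]) (auto simp: app_def scaleC_one)
  qed
  have pc: "\<phi> = 0" if c: "c = \<i> \<or> c = - \<i>" and h: "\<forall>b\<in>dom ?A. cinner (app ?A b + c *\<^sub>C b) \<phi> = 0" for c \<phi>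
  proof -
    obtain \<psi> where psi: "\<psi> \<in> dom H" "app H \<psi> + \<psi> = \<phi>" using surj1 by blast
    obtain v where v: "?C \<psi> = Some v" "?Xc \<psi> = Some v" "?Xc v = Some (app H \<psi>)" using S1'[OF psi(1)] by blast
    define \<eta> where "\<eta> = v + c *\<^sub>C \<psi>"
    obtain a where a: "\<And>n. a n \<in> dom ?A" "a \<longlonglongrightarrow> \<psi>" "(\<lambda>n. app ?A (a n)) \<longlonglongrightarrow> v"
      using v(1) closure_op_seq[OF linA clA] by blast
    have "(\<lambda>n. cinner (app ?A (a n) + c *\<^sub>C a n) \<phi>) \<longlonglongrightarrow> cinner \<eta> \<phi>"
      unfolding \<eta>_def by (intro tendsto_cinner tendsto_add tendsto_scaleC a tendsto_const)
    moreover have "(\<lambda>n. cinner (app ?A (a n) + c *\<^sub>C a n) \<phi>) = (\<lambda>n. 0)" using h a(1) by simp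
    ultimately have e0: "cinner \<eta> \<phi> = 0" using LIMSEQ_unique tendsto_const by metis
    have Xe: "?Xc \<eta> = Some (app H \<psi> + c *\<^sub>C v)"
      unfolding \<eta>_def by (rule closure_op_add[OF linX clX v(3) closure_op_scale[OF linX clX v(2)]])
    have cc: "c * c = -1" using c by auto
    have phi: "\<phi> = app ?Xc \<eta> - c *\<^sub>C \<eta>"
    proof -
      have "app ?Xc \<eta> - c *\<^sub>C \<eta> = app H \<psi> + c *\<^sub>C v - (c *\<^sub>C v + (c * c) *\<^sub>C \<psi>)"
        using Xe by (simp add: app_def \<eta>_def scaleC_add_right scaleC_scaleC)
      also have "\<dots> = app H \<psi> + \<psi>" by (simp add: cc scaleC_minus1)
      finally show ?thesis using psi(2) by simp
    qed
    have eX: "\<eta> \<in> dom ?Xc" using Xe by blast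
    have im: "Im (cinner \<eta> (app ?Xc \<eta>)) = 0"
    proof -
      have "Im (cinner (app ?Xc \<eta>) \<eta>) = 0" by (rule symm_real[OF symXc eX])
      then show ?thesis by (metis cinner_commute cnj.sel(2) neg_equal_0_iff_equal)
    qed
    have "0 = cinner \<eta> \<phi>" using e0 by simp
    also have "\<dots> = cinner \<eta> (app ?Xc \<eta>) - c * of_real ((norm \<eta>)^2)"
      by (simp add: phi cinner_diff_right cinner_scaleC_right cinner_self)
    finally have "Im (cinner \<eta> (app ?Xc \<eta>) - c * of_real ((norm \<eta>)^2)) = 0" by simp
    then have "(norm \<eta>)^2 = 0" using im c by auto
    then have "\<eta> = 0" by simp
    then show ?thesis using phi linear_opD(5)[OF linXc] by simp
  qed
  have pp: "\<phi> = 0" if "\<forall>b\<in>dom ?A. cinner (app ?A b + \<i> *\<^sub>C b) \<phi> = 0" for \<phi>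
    by (rule pc[of "\<i>"]) (simp_all add: that)
  have pm: "\<phi> = 0" if "\<forall>b\<in>dom ?A. cinner (app ?A b + (- \<i>) *\<^sub>C b) \<phi> = 0" for \<phi>
    by (rule pc[of "- \<i>"]) (simp_all add: that)
  note esa = esa_of_perp[OF linA dA symA pp pm]
  note FC = sa_facts[OF esa(2)]
  have CeqX: "?C = ?Xc"
  proof
    fix y
    show "?C y = ?Xc y"
    proof (cases "?C y")
      case (Some z) then show ?thesis using CXc by simp
    next
      case None
      show ?thesis
      proof (cases "?Xc y")
        case None2: None then show ?thesis using None by simp
      next
        case (Some z)
        have "\<forall>x\<in>dom ?C. cinner (app ?C x) y = cinner x z"
        proof
          fix x assume x: "x \<in> dom ?C"
          have cx: "?Xc x = Some (app ?C x)" using CXc dom_app[OF x] by blast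
          then have "cinner (app ?C x) y = cinner (app ?Xc x) y" by (simp add: app_def)
          also have "\<dots> = cinner x (app ?Xc y)" using symm_onD[OF symXc, of x y] cx Some by (simp add: domIff)
          finally show "cinner (app ?C x) y = cinner x z" using Some by (simp add: app_def)
        qed
        then have "?C y = Some z" using FC(3) by blast
        then show ?thesis using None by simp
      qed
    qed
  qed
  have sq: "?Xc \<circ>\<^sub>m ?Xc = H"
  proof
    fix y
    show "(?Xc \<circ>\<^sub>m ?Xc) y = H y"
    proof (cases "y \<in> dom H")
      case True
      obtain v where v: "?Xc y = Some v" "?Xc v = Some (app H y)" using S1'[OF True] by blast
      then show ?thesis using dom_app[OF True] by (simp add: map_comp_def)
    next
      case False
      have "(?Xc \<circ>\<^sub>m ?Xc) y = None"
      proof (rule ccontr)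
        assume "(?Xc \<circ>\<^sub>m ?Xc) y \<noteq> None"
        then obtain v w where vw: "?Xc y = Some v" "?Xc v = Some w"
          by (auto simp: map_comp_def split: option.splits)
        have "\<forall>x\<in>dom H. cinner (app H x) y = cinner x w"
        proof
          fix x assume x: "x \<in> dom H"
          obtain u where u: "?Xc x = Some u" "?Xc u = Some (app H x)" using S1'[OF x] by blast
          have "cinner (app H x) y = cinner (app ?Xc u) y" using u(2) by (simp add: app_def)
          also have "\<dots> = cinner u (app ?Xc y)" using symm_onD[OF symXc, of u y] u vw by (simp add: domIff)
          also have "\<dots> = cinner u v" using vw by (simp add: app_def)
          also have "\<dots> = cinner (app ?Xc x) v" using u by (simp add: app_def)
          also have "\<dots> = cinner x (app ?Xc v)" using symm_onD[OF symXc, of x v] u vw by (simp add: domIff)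
          also have "\<dots> = cinner x w" using vw by (simp add: app_def)
          finally show "cinner (app H x) y = cinner x w" .
        qed
        then have "H y = Some w" using F(3) by blast
        then show False using False by blast
      qed
      then show ?thesis using False by (simp add: domIff)
    qed
  qed
  show ?thesis unfolding ess_self_adjoint_def using esa CeqX sq nn domHXc by simp
qed

theorem lemma1p2p1:
  fixes H :: "'a::chilbert lop" and U :: "real \<Rightarrow> 'a \<Rightarrow> 'a" and B :: "'a set"
  assumes "self_adjoint H"
    and "unitary_group_of H U"
    and "csubspace B" and "B \<subseteq> dom H" and "dense_set B"
    and "(\<forall>t. U t ` B \<subseteq> B) \<or>
         ((\<forall>x\<in>B. app H x \<in> B) \<and>
          (\<exists>S\<subseteq>B. dense_set S \<and> (\<forall>x\<in>S. analytic_vector H x)))"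
  shows "is_core H B \<and>
    (\<forall>X::'a lop. symmetric_op X \<and> B \<subseteq> dom X \<and> (\<forall>x\<in>B. app X x \<in> dom X) \<and>
        (X \<circ>\<^sub>m X) |` B = H |` B \<longrightarrow>
      ess_self_adjoint (X |` B) \<and>
      closure_op (X |` B) = closure_op X \<and>
      closure_op X \<circ>\<^sub>m closure_op X = H \<and>
      nonneg_op H \<and>
      dom H \<subseteq> dom (closure_op X))"
proof -
  have pp: "\<phi> = 0" if h: "\<forall>b\<in>B. cinner (app H b + \<i> *\<^sub>C b) \<phi> = 0" for \<phi>
    using assms(6)
  proof
    assume inv: "\<forall>t. U t ` B \<subseteq> B"
    show "\<phi> = 0" by (rule perp_U_case[OF assms(2) assms(4) assms(5) inv h])
  next
    assume an: "(\<forall>x\<in>B. app H x \<in> B) \<and> (\<exists>S\<subseteq>B. dense_set S \<and> (\<forall>x\<in>S. analytic_vector H x))"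
    then obtain S where S: "S \<subseteq> B" "dense_set S" "\<forall>x\<in>S. analytic_vector H x" by blast
    have HB: "\<forall>x\<in>B. app H x \<in> B" using an by blast
    show "\<phi> = 0" by (rule perp_analytic_case[OF assms(2) assms(4) HB S h])
  qed
  note core = core_of_perp[OF assms(1) assms(3) assms(4) pp]
  show ?thesis using core(1) part2[OF assms(1) assms(3) assms(4) assms(5) core(2)] by blast
qed

end
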